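(* Let $\Lambda$ be the $2$-graph with a single vertex $v$, two edges $f_1,f_2$ of degree $e_1$, one edge $e$ of degree $e_2$, and factorization rules $f_1e=ef_2$ and $ef_1=f_2e$. Every $\xi\in\Lambda^\infty$ can be written uniquely as $\xi=eg_1eg_2eg_3\cdots$ with $g_i\in\{f_1,f_2\}$. Let $(\gamma_n)_{n\ge1}$ be real numbers with $|\gamma_n|<1/2$ and $\sum_n|\gamma_n|<\infty$, and for a finite path $eg_1\cdots eg_n$ set $\alpha_i=\tfrac12+\gamma_i$ if $g_i=f_1$ and $\alpha_i=\tfrac12-\gamma_i$ if $g_i=f_2$; define $\mu(Z(v))=1$ and $\mu(Z(eg_1eg_2\cdots eg_n))=\prod_{i=1}^n\alpha_i$. Then: (a) $\mu$ extends uniquely to a Borel probability measure on $\Lambda^\infty$, and the standard prefixing and coding maps make $(\Lambda^\infty,\mu)$ a $\Lambda$-semibranching function system; (b) $\mu$ is equivalent (mutually absolutely continuous) to the Perron–Frobenius measure $M$ of $\Lambda$, which here is given by $M(Z(\lambda))=2^{-d(\lambda)_1}$; (c) the $\Lambda$-semibranching representation of $C^*(\Lambda)$ on $L^2(\Lambda^\infty,\mu)$ is unitarily equivalent to the standard one on $L^2(\Lambda^\infty,M)$; in particular all such representations (for all admissible sequences $(\gamma_n)$) are unitarily equivalent.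
   Context: $2$-graph: countable small category with degree functor $d:\Lambda\to\mathbb N^2$ with unique factorization; $e_1,e_2$ standard basis of $\mathbb N^2$. Infinite paths $\Lambda^\infty$ (degree-preserving functors from $\Omega_2$), cylinder sets $Z(\lambda)=\{x:x(0,d(\lambda))=\lambda\}$ generate the topology and Borel $\sigma$-algebra. Standard coding maps $\sigma^m(x)(p,q)=x(p+m,q+m)$; standard prefixing maps $\sigma_\lambda:Z(s(\lambda))\to Z(\lambda)$, $x\mapsto\lambda x$. A $\Lambda$-semibranching function system on $(X,\mu)$: measurable sets $D_\lambda$, prefixing maps $\tau_\lambda:D_\lambda\to X$ with ranges $R_\lambda$, coding maps $\tau^m$, such that for each $m$ the $R_\lambda$, $\lambda\in\Lambda^m$, cover $X$ up to a null set and are a.e. disjoint, $\tau^m\circ\tau_\lambda=\mathrm{id}_{D_\lambda}$, $\mu\circ\tau_\lambda\ll\mu$ with $\Phi_{\tau_\lambda}=d(\mu\circ\tau_\lambda)/d\mu>0$ a.e. on $D_\lambda$; $\tau_v=\mathrm{id}$ and $\mu(D_v)>0$; $R_\nu\subseteq D_\lambda$ and $\tau_\lambda\tau_\nu=\tau_{\lambda\nu}$ a.e. when $s(\lambda)=r(\nu)$; $\tau^m\tau^n=\tau^{m+n}$. Its associated ($\Lambda$-semibranching) representation on $L^2(X,\mu)$ is $S_\lambda\xi(x)=\chi_{R_\lambda}(x)\Phi_{\tau_\lambda}(\tau^{d(\lambda)}x)^{-1/2}\xi(\tau^{d(\lambda)}x)$. Perron–Frobenius measure: for finite strongly connected $\Lambda$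 with vertex matrices $A_i(v,w)=|v\Lambda^{e_i}w|$, $M(Z(\lambda))=\rho(\Lambda)^{-d(\lambda)}\kappa_{s(\lambda)}$ where $\rho(\Lambda)=(\rho(A_1),\dots,\rho(A_k))$ and $\kappa$ is the unimodular positive common Perron–Frobenius eigenvector. The standard $\Lambda$-semibranching function system on $(\Lambda^\infty,M)$ uses the standard prefixing and coding maps. *)

theory Defs
  imports "HOL-Probability.Probability" "HOL-Library.Product_Plus" "HOL-Library.Product_Order"
begin

text \<open>A morphism of degree (m,n) is represented by its unique normal form
 k_1 ... k_m e^n (blue edges first), encoded as the triple (m, n, [k_1,...,k_m]) with
 True = f1, False = f2.  Composition moves the e^n of the first factor past the blue edges
 of the second factor, flipping each of them n times.\<close>

type_synonym path = "nat \<times> nat \<times> bool list"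

definition Lam :: "path set" where
  "Lam = {(m, n, k). length k = m}"

definition deg :: "path \<Rightarrow> nat \<times> nat" where
  "deg l = (fst l, fst (snd l))"

definition comp :: "path \<Rightarrow> path \<Rightarrow> path" where
  "comp l \<nu> = (case l of (m, n, k) \<Rightarrow> case \<nu> of (m', n', k') \<Rightarrow>
      (m + m', n + n', k @ map (\<lambda>b. b \<noteq> odd n) k'))"

definition vtx :: path where "vtx = (0, 0, [])"
definition f1 :: path where "f1 = (1, 0, [True])"
definition f2 :: path where "f2 = (1, 0, [False])"
definition ee :: path where "ee = (0, 1, [])"

definition src :: "path \<Rightarrow> path" where "src l = vtx"

lemma factorization_rules: "comp f1 ee = comp ee f2" "comp ee f1 = comp f2 ee"
  by (simp_all add: comp_def f1_def f2_def ee_def)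

definition Lam_deg :: "nat \<times> nat \<Rightarrow> path set" where
  "Lam_deg m = {l \<in> Lam. deg l = m}"

text \<open>Degree preserving functors from Omega_2 = {(p,q). p \<le> q} (componentwise order on N^2,
 with (p,q)(q,r) = (p,r), d(p,q) = q - p) into Lambda; extensional (undefined off Omega_2).\<close>

type_synonym ipath = "nat \<times> nat \<Rightarrow> nat \<times> nat \<Rightarrow> path"

definition Linf :: "ipath set" where
  "Linf = {x. (\<forall>p q. p \<le> q \<longrightarrow> x p q \<in> Lam \<and> deg (x p q) = q - p)
            \<and> (\<forall>p q r. p \<le> q \<and> q \<le> r \<longrightarrow> comp (x p q) (x q r) = x p r)
            \<and> (\<forall>p q. \<not> p \<le> q \<longrightarrow> x p q = undefined)}"

definition Zc :: "path \<Rightarrow> ipath set" where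
  "Zc l = {x \<in> Linf. x 0 (deg l) = l}"

definition Linf_M :: "ipath measure" where
  "Linf_M = sigma Linf (Zc ` Lam)"

definition code_std :: "nat \<times> nat \<Rightarrow> ipath \<Rightarrow> ipath" where
  "code_std m x = (\<lambda>p q. if p \<le> q then x (p + m) (q + m) else undefined)"

definition pre_std :: "path \<Rightarrow> ipath \<Rightarrow> ipath" where
  "pre_std l x = (THE y. y \<in> Linf \<and> y 0 (deg l) = l \<and> code_std (deg l) y = x)"

definition D_std :: "path \<Rightarrow> ipath set" where
  "D_std l = Zc (src l)"

text \<open>The path e g_1 e g_2 ... e g_n (g_i = f1 if g i, f2 otherwise), indices 1..n.\<close>
definition blue :: "bool \<Rightarrow> path" where
  "blue b = (if b then f1 else f2)"

fun std_path :: "(nat \<Rightarrow> bool) \<Rightarrow> nat \<Rightarrow> path" where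
  "std_path g 0 = vtx"
| "std_path g (Suc n) = comp (std_path g n) (comp ee (blue (g (Suc n))))"

definition admissible :: "(nat \<Rightarrow> real) \<Rightarrow> bool" where
  "admissible \<gamma> \<longleftrightarrow> (\<forall>n\<ge>1. \<bar>\<gamma> n\<bar> < 1/2) \<and> summable (\<lambda>n. \<bar>\<gamma> (Suc n)\<bar>)"

definition alpha :: "(nat \<Rightarrow> real) \<Rightarrow> (nat \<Rightarrow> bool) \<Rightarrow> nat \<Rightarrow> real" where
  "alpha \<gamma> g i = (if g i then 1/2 + \<gamma> i else 1/2 - \<gamma> i)"

text \<open>mu is a Borel probability measure on Lambda^infinity with the prescribed cylinder values
 (the case n = 0 gives mu(Z(v)) = 1).\<close>
definition gamma_measure :: "(nat \<Rightarrow> real) \<Rightarrow> ipath measure \<Rightarrow> bool" where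
  "gamma_measure \<gamma> \<mu> \<longleftrightarrow> sets \<mu> = sets Linf_M \<and> prob_space \<mu> \<and>
     (\<forall>n g. emeasure \<mu> (Zc (std_path g n)) = ennreal (\<Prod>i\<in>{1..n}. alpha \<gamma> g i))"

text \<open>Perron-Frobenius measure: M(Z(lambda)) = rho(Lambda)^(-d(lambda)) kappa_(s(lambda)).
 With one vertex the vertex matrices are 1x1: A_i = (|v Lambda^(e_i) v|), so rho(A_i) = A_i
 and the unimodular positive Perron-Frobenius eigenvector is kappa = (1).\<close>
definition vertex_matrix_entry :: "nat \<times> nat \<Rightarrow> real" where
  "vertex_matrix_entry m = real (card (Lam_deg m))"

definition PF_measure :: "ipath measure \<Rightarrow> bool" where
  "PF_measure M \<longleftrightarrow> sets M = sets Linf_M \<and>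
     (\<forall>l\<in>Lam. emeasure M (Zc l) =
        ennreal (vertex_matrix_entry (1,0) powr (- real (fst (deg l)))
               * vertex_matrix_entry (0,1) powr (- real (snd (deg l))) * 1))"

definition pullback :: "'x measure \<Rightarrow> 'x set \<Rightarrow> ('x \<Rightarrow> 'x) \<Rightarrow> 'x measure" where
  "pullback \<mu> D t = measure_of D (sets (restrict_space \<mu> D)) (\<lambda>A. emeasure \<mu> (t ` A))"

definition Phi :: "'x measure \<Rightarrow> (path \<Rightarrow> 'x set) \<Rightarrow> (path \<Rightarrow> 'x \<Rightarrow> 'x) \<Rightarrow> path \<Rightarrow> 'x \<Rightarrow> ennreal" where
  "Phi \<mu> D \<tau> l = RN_deriv (restrict_space \<mu> (D l)) (pullback \<mu> (D l) (\<tau> l))"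

definition SBFS :: "'x measure \<Rightarrow> (path \<Rightarrow> 'x set) \<Rightarrow> (path \<Rightarrow> 'x \<Rightarrow> 'x)
                      \<Rightarrow> (nat \<times> nat \<Rightarrow> 'x \<Rightarrow> 'x) \<Rightarrow> bool" where
  "SBFS \<mu> D \<tau> \<tau>c \<longleftrightarrow>
     (\<forall>l\<in>Lam. D l \<in> sets \<mu> \<and> \<tau> l \<in> measurable (restrict_space \<mu> (D l)) \<mu>
        \<and> (\<forall>A\<in>sets \<mu>. A \<subseteq> D l \<longrightarrow> \<tau> l ` A \<in> sets \<mu>))
   \<and> (\<forall>m. \<tau>c m \<in> measurable \<mu> \<mu>)
   \<and> (\<forall>m. space \<mu> - (\<Union>l\<in>Lam_deg m. \<tau> l ` D l) \<in> null_sets \<mu>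
        \<and> (\<forall>l\<in>Lam_deg m. \<forall>l'\<in>Lam_deg m. l \<noteq> l' \<longrightarrow>
              \<tau> l ` D l \<inter> \<tau> l' ` D l' \<in> null_sets \<mu>))
   \<and> (\<forall>l\<in>Lam. \<forall>x\<in>D l. \<tau>c (deg l) (\<tau> l x) = x)
   \<and> (\<forall>l\<in>Lam. absolutely_continuous (restrict_space \<mu> (D l)) (pullback \<mu> (D l) (\<tau> l))
        \<and> (AE x in restrict_space \<mu> (D l). Phi \<mu> D \<tau> l x > 0))
   \<and> (\<forall>x\<in>D vtx. \<tau> vtx x = x) \<and> emeasure \<mu> (D vtx) > 0
   \<comment> \<open>s(lambda) = r(nu) always holds: there is a single vertex\<close>
   \<and> (\<forall>l\<in>Lam. \<forall>\<nu>\<in>Lam. \<tau> \<nu> ` D \<nu> \<subseteq> D l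
        \<and> (AE x in restrict_space \<mu> (D \<nu>). \<tau> l (\<tau> \<nu> x) = \<tau> (comp l \<nu>) x))
   \<and> (\<forall>m n. \<forall>x\<in>space \<mu>. \<tau>c m (\<tau>c n x) = \<tau>c (m + n) x)"

definition L2 :: "'x measure \<Rightarrow> ('x \<Rightarrow> complex) set" where
  "L2 \<mu> = {f. f \<in> borel_measurable \<mu> \<and> integrable \<mu> (\<lambda>x. (cmod (f x))\<^sup>2)}"

definition sb_op :: "'x measure \<Rightarrow> (path \<Rightarrow> 'x set) \<Rightarrow> (path \<Rightarrow> 'x \<Rightarrow> 'x)
     \<Rightarrow> (nat \<times> nat \<Rightarrow> 'x \<Rightarrow> 'x) \<Rightarrow> path \<Rightarrow> ('x \<Rightarrow> complex) \<Rightarrow> 'x \<Rightarrow> complex" where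
  "sb_op \<mu> D \<tau> \<tau>c l \<xi> x =
     (if x \<in> \<tau> l ` D l
      then complex_of_real (enn2real (Phi \<mu> D \<tau> l (\<tau>c (deg l) x)) powr (-1/2))
           * \<xi> (\<tau>c (deg l) x)
      else 0)"

text \<open>A unitary operator L^2(mu) -> L^2(N), acting on representatives.\<close>
definition unitary_L2 :: "'x measure \<Rightarrow> 'y measure \<Rightarrow> (('x \<Rightarrow> complex) \<Rightarrow> ('y \<Rightarrow> complex)) \<Rightarrow> bool" where
  "unitary_L2 \<mu> N U \<longleftrightarrow>
     (\<forall>\<xi>\<in>L2 \<mu>. U \<xi> \<in> L2 N)
   \<and> (\<forall>\<xi>\<in>L2 \<mu>. \<forall>\<eta>\<in>L2 \<mu>. (AE x in \<mu>. \<xi> x = \<eta> x) \<longrightarrow> (AE y in N. U \<xi> y = U \<eta> y))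
   \<and> (\<forall>\<xi>\<in>L2 \<mu>. \<forall>\<eta>\<in>L2 \<mu>. \<forall>c. AE y in N. U (\<lambda>x. c * \<xi> x + \<eta> x) y = c * U \<xi> y + U \<eta> y)
   \<and> (\<forall>\<xi>\<in>L2 \<mu>. (\<integral>y. (cmod (U \<xi> y))\<^sup>2 \<partial>N) = (\<integral>x. (cmod (\<xi> x))\<^sup>2 \<partial>\<mu>))
   \<and> (\<forall>\<eta>\<in>L2 N. \<exists>\<xi>\<in>L2 \<mu>. AE y in N. U \<xi> y = \<eta> y)"

text \<open>The standard-maps semibranching representations of C*(Lambda) on L^2(mu) and L^2(N)
 are unitarily equivalent: a unitary U with U S^mu_lambda = S^N_lambda U for all lambda
 (equivalence on the generators s_lambda of C*(Lambda)).\<close>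
definition std_rep_equiv :: "ipath measure \<Rightarrow> ipath measure \<Rightarrow> bool" where
  "std_rep_equiv \<mu> N \<longleftrightarrow> (\<exists>U. unitary_L2 \<mu> N U \<and>
     (\<forall>l\<in>Lam. \<forall>\<xi>\<in>L2 \<mu>. AE y in N.
        U (sb_op \<mu> D_std pre_std code_std l \<xi>) y = sb_op N D_std pre_std code_std l (U \<xi>) y))"

end

theory Submission
  imports Defs
begin

definition X :: "(nat \<Rightarrow> bool) \<Rightarrow> ipath" where
  "X c = (\<lambda>p q. if p \<le> q then (fst q - fst p, snd q - snd p,
      map (\<lambda>j. c j \<noteq> odd (snd p)) [fst p..<fst q]) else undefined)"

definition bl :: "ipath \<Rightarrow> nat \<Rightarrow> bool" where
  "bl x j = snd (snd (x 0 (Suc j, 0))) ! j"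

lemma prod_diff_eq: "(q::nat\<times>nat) - p = (fst q - fst p, snd q - snd p)"
  by (simp add: prod_eq_iff)

lemma flipmap: "p2 \<le> (q2::nat) \<Longrightarrow> map (\<lambda>b. b \<noteq> odd (q2 - p2)) (map (\<lambda>j. c j \<noteq> odd q2) xs)
        = map (\<lambda>j. c j \<noteq> odd p2) xs"
  by (induct xs) (auto simp: even_diff_iff)

lemma X_in_Linf: "X c \<in> Linf"
proof -
  have 1: "comp (X c p q) (X c q r) = X c p r" if "p \<le> q" "q \<le> r" for p q r
  proof -
    obtain p1 p2 q1 q2 r1 r2 where pq: "p = (p1,p2)" "q = (q1,q2)" "r = (r1,r2)" by (cases p, cases q, cases r) auto
    have le: "p1 \<le> q1" "p2 \<le> q2" "q1 \<le> r1" "q2 \<le> r2" using that pq by (auto simp: less_eq_prod_def)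
    have pr: "p \<le> r" using that by (rule order_trans)
    have u: "[p1..<q1] @ [q1..<r1] = [p1..<r1]" using le by (metis upt_add_eq_append le_add_diff_inverse)
    have Xpq: "X c p q = (q1-p1, q2-p2, map (\<lambda>j. c j \<noteq> odd p2) [p1..<q1])" using that by (simp add: X_def pq)
    have Xqr: "X c q r = (r1-q1, r2-q2, map (\<lambda>j. c j \<noteq> odd q2) [q1..<r1])" using that by (simp add: X_def pq)
    have Xpr: "X c p r = (r1-p1, r2-p2, map (\<lambda>j. c j \<noteq> odd p2) [p1..<r1])" using pr by (simp add: X_def pq)
    have "comp (X c p q) (X c q r) = (q1-p1 + (r1-q1), q2-p2+(r2-q2), map (\<lambda>j. c j \<noteq> odd p2) [p1..<q1]
       @ map (\<lambda>b. b \<noteq> odd (q2 - p2)) (map (\<lambda>j. c j \<noteq> odd q2) [q1..<r1]))"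
      by (simp only: comp_def Xpq Xqr prod.case)
    also have "\<dots> = X c p r" unfolding Xpr flipmap[OF le(2)] map_append[symmetric] u using le by simp
    finally show ?thesis .
  qed
  show ?thesis unfolding Linf_def
  proof (intro CollectI conjI allI impI)
    fix p q :: "nat \<times> nat" assume "p \<le> q"
    then show "X c p q \<in> Lam" "deg (X c p q) = q - p"
      by (auto simp: X_def Lam_def deg_def prod_diff_eq)
  next
    fix p q r :: "nat \<times> nat" assume "p \<le> q \<and> q \<le> r"
    then show "comp (X c p q) (X c q r) = X c p r" using 1 by blast
  next
    fix p q :: "nat \<times> nat" assume "\<not> p \<le> q"
    then show "X c p q = undefined" by (simp add: X_def)
  qed
qed

lemma Linf_shape:
  assumes "x \<in> Linf" "p \<le> q"
  shows "x p q = (fst q - fst p, snd q - snd p, snd (snd (x p q)))"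
    "length (snd (snd (x p q))) = fst q - fst p"
proof -
  have "x p q \<in> Lam \<and> deg (x p q) = q - p" using assms unfolding Linf_def by blast
  then show "x p q = (fst q - fst p, snd q - snd p, snd (snd (x p q)))"
    "length (snd (snd (x p q))) = fst q - fst p"
    by (auto simp: Lam_def deg_def prod_eq_iff)
qed

lemma zero_le_pair [simp]: "(0::nat\<times>nat) \<le> p"
  by (cases p) (simp add: zero_prod_def less_eq_prod_def)

lemma Linf_comp: "x \<in> Linf \<Longrightarrow> p \<le> q \<Longrightarrow> q \<le> r \<Longrightarrow> comp (x p q) (x q r) = x p r"
  unfolding Linf_def by blast

lemma Linf_undef: "x \<in> Linf \<Longrightarrow> \<not> p \<le> q \<Longrightarrow> x p q = undefined"
  unfolding Linf_def by blast

lemma comp_lst: "snd (snd (comp (m, n, k) (m', n', k'))) = k @ map (\<lambda>b. b \<noteq> odd n) k'"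
  by (simp add: comp_def)

lemma Linf_lst_a0:
  assumes x: "x \<in> Linf"
  shows "snd (snd (x 0 (a, 0))) = map (bl x) [0..<a]"
proof (induct a)
  case 0
  have h: "(0::nat\<times>nat) \<le> (0,0)" by (rule zero_le_pair)
  show ?case using Linf_shape(2)[OF x h] by simp
next
  case (Suc a)
  have le: "(0::nat\<times>nat) \<le> (a,0)" "(a,0::nat) \<le> (Suc a, 0)" by (rule zero_le_pair) (auto simp: less_eq_prod_def)
  have c: "x 0 (Suc a, 0) = comp (x 0 (a,0)) (x (a,0) (Suc a, 0))" using Linf_comp[OF x le] by simp
  obtain w where w: "snd (snd (x (a,0) (Suc a, 0))) = [w]"
    using Linf_shape(2)[OF x le(2)] by (cases "snd (snd (x (a,0) (Suc a, 0)))") auto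
  have "snd (snd (x 0 (Suc a, 0))) = snd (snd (x 0 (a,0))) @ [w]"
    unfolding c by (subst Linf_shape(1)[OF x le(1)], subst Linf_shape(1)[OF x le(2)]) (simp add: comp_lst w)
  moreover have "bl x a = w" unfolding bl_def calculation Suc by (simp add: nth_append)
  ultimately show ?case using Suc by simp
qed

lemma Linf_lst_0:
  assumes x: "x \<in> Linf"
  shows "snd (snd (x 0 (a, b))) = map (bl x) [0..<a]"
proof -
  have le: "(0::nat\<times>nat) \<le> (a,0)" "(a,0::nat) \<le> (a, b)" by (rule zero_le_pair) (auto simp: less_eq_prod_def)
  have c: "x 0 (a, b) = comp (x 0 (a,0)) (x (a,0) (a, b))" using Linf_comp[OF x le] by simp
  have "snd (snd (x (a,0) (a, b))) = []" using Linf_shape(2)[OF x le(2)] by simp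
  then show ?thesis unfolding c 
    by (subst Linf_shape(1)[OF x le(1)], subst Linf_shape(1)[OF x le(2)]) (simp add: comp_lst Linf_lst_a0[OF x])
qed

lemma Linf_X_bl:
  assumes x: "x \<in> Linf"
  shows "X (bl x) = x"
proof (intro ext)
  fix p q :: "nat \<times> nat"
  show "X (bl x) p q = x p q"
  proof (cases "p \<le> q")
    case False
    then show ?thesis using Linf_undef[OF x False] by (simp add: X_def)
  next
    case True
    obtain p1 p2 q1 q2 where pq: "p = (p1,p2)" "q = (q1,q2)" by (cases p, cases q) auto
    have le: "p1 \<le> q1" "p2 \<le> q2" using True pq by (auto simp: less_eq_prod_def)
    have "(0::nat\<times>nat) \<le> p" by (rule zero_le_pair)
    note c = Linf_comp[OF x this True]
    define K where "K = snd (snd (x p q))"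
    have K: "x p q = (q1 - p1, q2 - p2, K)" "length K = q1 - p1"
      using Linf_shape[OF x True] unfolding K_def pq by auto
    have x0p: "x 0 p = (p1, p2, map (bl x) [0..<p1])"
      using Linf_shape(1)[OF x zero_le_pair, of p] Linf_lst_0[OF x, of p1 p2] unfolding pq by simp
    have x0q: "snd (snd (x 0 q)) = map (bl x) [0..<q1]"
      using Linf_lst_0[OF x, of q1 q2] unfolding pq by simp
    have "map (bl x) [0..<q1] = snd (snd (comp (x 0 p) (x p q)))" unfolding c x0q ..
    also have "\<dots> = map (bl x) [0..<p1] @ map (\<lambda>b. b \<noteq> odd p2) K"
      unfolding x0p K(1) comp_lst ..
    finally have "map (bl x) [0..<q1] = map (bl x) [0..<p1] @ map (\<lambda>b. b \<noteq> odd p2) K" .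
    then have "map (\<lambda>b. b \<noteq> odd p2) K = drop p1 (map (bl x) [0..<q1])" by simp
    also have "\<dots> = map (bl x) [p1..<q1]" using le by (simp add: drop_map)
    finally have "map (\<lambda>b. b \<noteq> odd p2) (map (\<lambda>b. b \<noteq> odd p2) K) = map (\<lambda>b. b \<noteq> odd p2) (map (bl x) [p1..<q1])"
      by simp
    moreover have "map (\<lambda>b. b \<noteq> odd p2) (map (\<lambda>b. b \<noteq> odd p2) K) = K" by (induct K) auto
    ultimately have "K = map (\<lambda>b. b \<noteq> odd p2) (map (bl x) [p1..<q1])" by simp
    then have KK: "K = map (\<lambda>j. bl x j \<noteq> odd p2) [p1..<q1]" by simp
    show ?thesis using True K(1) KK unfolding X_def pq by simp
  qed
qed

lemma bl_X: "bl (X c) = c"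
  by (rule ext) (simp add: bl_def X_def less_eq_prod_def zero_prod_def nth_append)

lemma Linf_eq: "Linf = range X"
  using X_in_Linf by (auto, metis Linf_X_bl rangeI)

definition shiftc :: "nat \<times> nat \<Rightarrow> (nat \<Rightarrow> bool) \<Rightarrow> nat \<Rightarrow> bool" where
  "shiftc m c j = (c (j + fst m) \<noteq> odd (snd m))"

definition prefc :: "path \<Rightarrow> (nat \<Rightarrow> bool) \<Rightarrow> nat \<Rightarrow> bool" where
  "prefc l c j = (if j < fst l then snd (snd l) ! j else (c (j - fst l) \<noteq> odd (fst (snd l))))"

definition Cyl :: "bool list \<Rightarrow> ipath set" where
  "Cyl k = {x \<in> Linf. \<forall>j<length k. bl x j = k ! j}"

lemma code_X: "code_std m (X c) = X (shiftc m c)"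
proof (intro ext)
  fix p q :: "nat \<times> nat"
  obtain p1 p2 q1 q2 m1 m2 where pq: "p = (p1,p2)" "q = (q1,q2)" "m = (m1,m2)" by (cases p, cases q, cases m) auto
  have e: "map (\<lambda>j. c j \<noteq> odd (p2 + m2)) [p1 + m1..<q1 + m1]
     = map (\<lambda>j. (c (j + m1) \<noteq> odd m2) \<noteq> odd p2) [p1..<q1]"
  proof -
    have u: "[p1 + m1..<q1 + m1] = map (\<lambda>j. j + m1) [p1..<q1]" by (rule nth_equalityI) auto
    have x: "(c (j + m1) \<noteq> odd (p2 + m2)) = ((c (j + m1) \<noteq> odd m2) \<noteq> odd p2)" for j
      by (cases "even p2"; cases "even m2") auto
    show ?thesis unfolding u map_map o_def using x by simp
  qed
  show "code_std m (X c) p q = X (shiftc m c) p q"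
    unfolding code_std_def X_def shiftc_def pq using e by (simp add: less_eq_prod_def)
qed

lemma code_Linf: "x \<in> Linf \<Longrightarrow> code_std m x = X (shiftc m (bl x))"
  using code_X Linf_X_bl by metis

lemma Lam_cases: "l \<in> Lam \<Longrightarrow> (\<And>a b k. l = (a, b, k) \<Longrightarrow> length k = a \<Longrightarrow> P) \<Longrightarrow> P"
  unfolding Lam_def by auto

lemma shiftc_prefc: "l = (a, b, k) \<Longrightarrow> shiftc (a, b) (prefc l c) = c"
  by (rule ext) (auto simp: shiftc_def prefc_def)

lemma X_0: "X c 0 (a, b) = (a, b, map c [0..<a])"
  by (simp add: X_def zero_prod_def less_eq_prod_def)

lemma X_inj: "X c = X c' \<Longrightarrow> c = c'"
  by (metis bl_X)

lemma pre_X: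
  assumes l: "l \<in> Lam"
  shows "pre_std l (X c) = X (prefc l c)"
proof -
  obtain a b k where lk: "l = (a, b, k)" "length k = a" using l by (rule Lam_cases)
  have dl: "deg l = (a, b)" by (simp add: deg_def lk)
  have pm: "map (prefc l c) [0..<a] = k"
    by (rule nth_equalityI) (auto simp: lk prefc_def)
  show ?thesis unfolding pre_std_def dl
  proof (rule the_equality)
    show "X (prefc l c) \<in> Linf \<and> X (prefc l c) 0 (a, b) = l \<and> code_std (a, b) (X (prefc l c)) = X c"
      using X_in_Linf pm by (simp add: X_0 lk code_X shiftc_prefc[OF refl])
  next
    fix y assume y: "y \<in> Linf \<and> y 0 (a, b) = l \<and> code_std (a, b) y = X c"
    then have y1: "y \<in> Linf" by blast
    have m: "map (bl y) [0..<a] = k" using y Linf_lst_0[OF y1, of a b] by (simp add: lk)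
    have sh: "shiftc (a,b) (bl y) = c" using y code_Linf[OF y1, of "(a,b)"] by (metis X_inj)
    have "bl y = prefc l c"
    proof (rule ext)
      fix j show "bl y j = prefc l c j"
      proof (cases "j < a")
        case True then show ?thesis using m lk by (auto simp: prefc_def dest: arg_cong[where f="\<lambda>xs. xs ! j"])
      next
        case False
        have "c (j - a) = (bl y j \<noteq> odd b)" using False unfolding sh[symmetric] shiftc_def by simp
        then show ?thesis using False lk by (auto simp: prefc_def)
      qed
    qed
    then show "y = X (prefc l c)" using Linf_X_bl[OF y1] by simp
  qed
qed

lemma pre_Linf: "l \<in> Lam \<Longrightarrow> x \<in> Linf \<Longrightarrow> pre_std l x = X (prefc l (bl x))"
  using pre_X Linf_X_bl by metis

lemma Zc_Cyl: "l = (a, b, k) \<Longrightarrow> length k = a \<Longrightarrow> Zc l = Cyl k"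
proof -
  assume lk: "l = (a, b, k)" "length k = a"
  have "x 0 (a, b) = (a, b, k) \<longleftrightarrow> (\<forall>j<length k. bl x j = k ! j)" if x: "x \<in> Linf" for x
  proof -
    have "x 0 (a, b) = (a, b, map (bl x) [0..<a])"
      using Linf_shape(1)[OF x zero_le_pair, of "(a,b)"] Linf_lst_0[OF x, of a b] by simp
    then show ?thesis using lk(2) by (auto simp: list_eq_iff_nth_eq)
  qed
  then show ?thesis unfolding Zc_def Cyl_def lk deg_def by auto
qed

lemma X_Cyl: "X c \<in> Cyl k \<longleftrightarrow> (\<forall>j<length k. c j = k ! j)"
  unfolding Cyl_def using X_in_Linf bl_X by auto

lemma std_path_eq: "std_path g n = (n, n, map (\<lambda>j. g (Suc j) = odd j) [0..<n])"
  by (induct n) (auto simp: vtx_def comp_def ee_def blue_def f1_def f2_def)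

lemma prefc_comp:
  assumes "l \<in> Lam" "\<nu> \<in> Lam"
  shows "prefc l (prefc \<nu> c) = prefc (comp l \<nu>) c"
proof -
  obtain a b k where lk: "l = (a, b, k)" "length k = a" using assms(1) by (rule Lam_cases)
  obtain a' b' k' where nk: "\<nu> = (a', b', k')" "length k' = a'" using assms(2) by (rule Lam_cases)
  show ?thesis
    by (rule ext) (auto simp: prefc_def lk nk comp_def nth_append)
qed


abbreviation S :: "(nat \<Rightarrow> bool) measure" where
  "S \<equiv> PiM UNIV (\<lambda>_. count_space UNIV)"

lemma space_S [simp]: "space S = UNIV"
  by (simp add: space_PiM)

lemma Zc_sub: "Zc ` Lam \<subseteq> Pow Linf"
  by (auto simp: Zc_def)

lemma space_Linf_M [simp]: "space Linf_M = Linf"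
  unfolding Linf_M_def using Zc_sub by simp

lemma sets_Linf_M: "sets Linf_M = sigma_sets Linf (Zc ` Lam)"
  unfolding Linf_M_def using Zc_sub by simp

lemma Zc_Lam_eq: "Zc ` Lam = range Cyl"
proof (intro subset_antisym subsetI)
  fix A assume "A \<in> Zc ` Lam"
  then obtain l where l: "l \<in> Lam" "A = Zc l" by auto
  obtain a b k where "l = (a, b, k)" "length k = a" using l(1) by (rule Lam_cases)
  then show "A \<in> range Cyl" using l Zc_Cyl by auto
next
  fix A assume "A \<in> range Cyl"
  then obtain k where "A = Cyl k" by auto
  moreover have "(length k, 0, k) \<in> Lam" by (simp add: Lam_def)
  ultimately show "A \<in> Zc ` Lam" using Zc_Cyl[of "(length k, 0, k)"] by (metis image_eqI)
qed

lemma sets_Linf_M': "sets Linf_M = sigma_sets Linf (range Cyl)"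
  using sets_Linf_M Zc_Lam_eq by simp

lemma Cyl_sets [measurable]: "Cyl k \<in> sets Linf_M"
  unfolding sets_Linf_M' by auto

lemma Cyl_sub: "Cyl k \<subseteq> Linf"
  by (auto simp: Cyl_def)

lemma coord_sets: "{x \<in> Linf. bl x j = v} \<in> sets Linf_M"
proof -
  let ?K = "{k. set k \<subseteq> UNIV \<and> length k = Suc j} \<inter> {k. k ! j = v}"
  have fin: "finite ?K" using finite_lists_length_eq[of "UNIV :: bool set"] by auto
  have "{x \<in> Linf. bl x j = v} = (\<Union>k\<in>?K. Cyl k)"
  proof (intro subset_antisym subsetI)
    fix x assume x: "x \<in> {x \<in> Linf. bl x j = v}"
    then have "map (bl x) [0..<Suc j] \<in> ?K" by (simp del: upt_Suc)
    moreover have "x \<in> Cyl (map (bl x) [0..<Suc j])" using x by (simp add: Cyl_def del: upt_Suc)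
    ultimately show "x \<in> (\<Union>k\<in>?K. Cyl k)" by blast
  next
    fix x assume "x \<in> (\<Union>k\<in>?K. Cyl k)"
    then show "x \<in> {x \<in> Linf. bl x j = v}" by (auto simp: Cyl_def)
  qed
  also have "\<dots> \<in> sets Linf_M" using fin by (intro sets.finite_UN) auto
  finally show ?thesis .
qed

lemma bl_coord_meas: "(\<lambda>x. bl x j) \<in> measurable Linf_M (count_space UNIV)"
proof -
  have "(\<lambda>x. bl x j) -` {v} \<inter> Linf = {x \<in> Linf. bl x j = v}" for v by auto
  then show ?thesis using coord_sets by (simp add: measurable_count_space_eq2)
qed

lemma bl_meas [measurable]: "bl \<in> measurable Linf_M S"
proof -
  have "(\<lambda>x j. bl x j) \<in> measurable Linf_M S"
    by (rule measurable_PiM_single') (auto simp: bl_coord_meas)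
  then show ?thesis by simp
qed

lemma X_meas [measurable]: "X \<in> measurable S Linf_M"
proof (rule measurable_sigma_sets[OF sets_Linf_M'])
  show "range Cyl \<subseteq> Pow Linf" using Cyl_sub by auto
  show "X \<in> space S \<rightarrow> Linf" using X_in_Linf by auto
  fix A assume "A \<in> range Cyl"
  then obtain k where A: "A = Cyl k" by auto
  have "X -` A \<inter> space S = {c \<in> space S. \<forall>j\<in>{..<length k}. c j = k ! j}" using A X_Cyl by auto
  also have "\<dots> \<in> sets S" by measurable
  finally show "X -` A \<inter> space S \<in> sets S" .
qed

lemma shiftc_meas [measurable]: "shiftc m \<in> measurable S S"
proof -
  have "(\<lambda>c j. shiftc m c j) \<in> measurable S S"
    by (rule measurable_PiM_single') (auto simp: shiftc_def)
  then show ?thesis by simp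
qed

lemma prefc_meas [measurable]: "prefc l \<in> measurable S S"
proof -
  have "(\<lambda>c j. prefc l c j) \<in> measurable S S"
    by (rule measurable_PiM_single') (auto simp: prefc_def)
  then show ?thesis by simp
qed

lemma code_meas [measurable]: "code_std m \<in> measurable Linf_M Linf_M"
proof -
  have "(\<lambda>x. X (shiftc m (bl x))) \<in> measurable Linf_M Linf_M" by measurable
  then show ?thesis by (rule measurable_cong[THEN iffD1, rotated]) (simp add: code_Linf)
qed

lemma pre_meas [measurable]: "l \<in> Lam \<Longrightarrow> pre_std l \<in> measurable Linf_M Linf_M"
proof -
  assume l: "l \<in> Lam"
  have "(\<lambda>x. X (prefc l (bl x))) \<in> measurable Linf_M Linf_M" by measurable
  then show ?thesis by (rule measurable_cong[THEN iffD1, rotated]) (simp add: pre_Linf l)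
qed


abbreviation B0 :: "bool measure" where "B0 \<equiv> measure_pmf (bernoulli_pmf (1/2))"
abbreviation M0 :: "(nat \<Rightarrow> bool) measure" where "M0 \<equiv> PiM UNIV (\<lambda>_. B0)"

definition Mstd :: "ipath measure" where "Mstd = distr M0 Linf_M X"

lemma sets_M0: "sets M0 = sets S"
  by (rule sets_PiM_cong) (auto simp: sets_measure_pmf_count_space)

lemma space_M0 [simp]: "space M0 = UNIV"
  by (simp add: space_PiM)

lemma X_meas0: "X \<in> measurable M0 Linf_M"
  using X_meas measurable_cong_sets[OF sets_M0 refl] by blast

lemma sets_Mstd [simp]: "sets Mstd = sets Linf_M" and space_Mstd [simp]: "space Mstd = Linf"
  by (simp_all add: Mstd_def)

lemma Cyl_Nil: "Cyl [] = Linf" by (simp add: Cyl_def)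

lemma emeasure_B0: "emeasure B0 {b} = ennreal (1/2)"
  by (cases b) (simp_all add: emeasure_pmf_single)

lemma Mstd_Cyl: "emeasure Mstd (Cyl k) = ennreal ((1/2) ^ length k)"
proof -
  let ?n = "length k"
  have "X -` Cyl k \<inter> space M0 = prod_emb UNIV (\<lambda>_. B0) {..<?n} (Pi\<^sub>E {..<?n} (\<lambda>j. {k ! j}))"
    by (auto simp: prod_emb_def X_Cyl PiE_iff space_PiM)
  then have "emeasure Mstd (Cyl k) = emeasure M0 (prod_emb UNIV (\<lambda>_. B0) {..<?n} (Pi\<^sub>E {..<?n} (\<lambda>j. {k ! j})))"
    unfolding Mstd_def by (simp add: emeasure_distr X_meas0)
  also have "\<dots> = (\<Prod>j<?n. emeasure B0 {k ! j})"
    by (rule emeasure_PiM_emb) (auto simp: prob_space_measure_pmf)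
  also have "\<dots> = ennreal (1/2) ^ ?n" by (simp only: emeasure_B0 prod_constant card_lessThan)
  also have "\<dots> = ennreal ((1/2) ^ ?n)" by (rule ennreal_power) simp
  finally show ?thesis .
qed

lemma prob_Mstd: "prob_space Mstd"
  by (rule prob_spaceI) (metis Mstd_Cyl Cyl_Nil space_Mstd list.size(3) power_0 ennreal_1)

lemma Cyl_Int_le:
  assumes "length k \<le> length k'"
  shows "Cyl k \<inter> Cyl k' = (if (\<forall>j<length k. k ! j = k' ! j) then Cyl k' else {})"
  using assms by (auto simp: Cyl_def)

lemma Cyl_Int: "Cyl k \<inter> Cyl k' \<in> insert {} (range Cyl)"
proof (cases "length k \<le> length k'")
  case True then show ?thesis using Cyl_Int_le[OF True] by auto
next
  case False
  then have "length k' \<le> length k" by simp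
  then show ?thesis using Cyl_Int_le[of k' k] by (auto simp: Int_commute)
qed

lemma sets_Linf_M'': "sets Linf_M = sigma_sets Linf (insert {} (range Cyl))"
proof -
  have "sigma_sets Linf (insert {} (range Cyl)) = sigma_sets Linf (range Cyl)"
  proof (rule sigma_sets_eqI)
    fix a assume "a \<in> insert {} (range Cyl)"
    then show "a \<in> sigma_sets Linf (range Cyl)" by (auto intro: sigma_sets.Empty)
  next
    fix b assume "b \<in> range Cyl" then show "b \<in> sigma_sets Linf (insert {} (range Cyl))" by auto
  qed
  then show ?thesis using sets_Linf_M' by simp
qed

lemma Linf_measure_eq:
  assumes "sets N1 = sets Linf_M" "sets N2 = sets Linf_M"
    and "\<And>k. emeasure N1 (Cyl k) = emeasure N2 (Cyl k)" and "emeasure N1 Linf \<noteq> \<infinity>"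
  shows "N1 = N2"
proof (rule measure_eqI_generator_eq[where E="insert {} (range Cyl)" and \<Omega> = Linf and A="\<lambda>_. Linf"])
  show "Int_stable (insert {} (range Cyl))"
    unfolding Int_stable_def using Cyl_Int by auto
  show "insert {} (range Cyl) \<subseteq> Pow Linf" using Cyl_sub by auto
  fix A assume "A \<in> insert {} (range Cyl)"
  then show "emeasure N1 A = emeasure N2 A" using assms(3) by auto
qed (use assms sets_Linf_M'' Cyl_Nil in auto)


lemma pre_in_Linf: "l \<in> Lam \<Longrightarrow> x \<in> Linf \<Longrightarrow> pre_std l x \<in> Linf"
  using pre_Linf X_in_Linf by metis

lemma pre_Cyl_iff:
  assumes lk: "l = (a, b, k)" "length k = a" and x: "x \<in> Linf"
  shows "pre_std l x \<in> Cyl k' \<longleftrightarrow> (\<forall>j<min (length k') a. k ! j = k' ! j) \<and>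
     x \<in> Cyl (map (\<lambda>j. k' ! (j + a) \<noteq> odd b) [0..<length k' - a])"
proof -
  have l: "l \<in> Lam" using lk by (simp add: Lam_def)
  have "pre_std l x \<in> Cyl k' \<longleftrightarrow> (\<forall>j<length k'. prefc l (bl x) j = k' ! j)"
    by (simp add: pre_Linf[OF l x] X_Cyl)
  also have "\<dots> \<longleftrightarrow> (\<forall>j<min (length k') a. k ! j = k' ! j) \<and>
       (\<forall>i<length k' - a. bl x i = (k' ! (i + a) \<noteq> odd b))" (is "?L \<longleftrightarrow> ?R1 \<and> ?R2")
  proof
    assume h: ?L
    have "?R1"
    proof (intro allI impI)
      fix j assume j: "j < min (length k') a"
      then show "k ! j = k' ! j" using h[rule_format, of j] by (simp add: prefc_def lk)
    qed
    moreover have "?R2"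
    proof (intro allI impI)
      fix i assume i: "i < length k' - a"
      then have "prefc l (bl x) (i + a) = k' ! (i + a)" using h by simp
      then show "bl x i = (k' ! (i + a) \<noteq> odd b)" by (auto simp: prefc_def lk)
    qed
    ultimately show "?R1 \<and> ?R2" ..
  next
    assume h: "?R1 \<and> ?R2"
    show ?L
    proof (intro allI impI)
      fix j assume j: "j < length k'"
      show "prefc l (bl x) j = k' ! j"
      proof (cases "j < a")
        case True then show ?thesis using h j by (simp add: prefc_def lk)
      next
        case False
        then have "bl x (j - a) = (k' ! (j - a + a) \<noteq> odd b)" using h j by auto
        then show ?thesis using False by (auto simp: prefc_def lk)
      qed
    qed
  qed
  also have "\<dots> \<longleftrightarrow> (\<forall>j<min (length k') a. k ! j = k' ! j) \<and>
     x \<in> Cyl (map (\<lambda>j. k' ! (j + a) \<noteq> odd b) [0..<length k' - a])"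
    using x by (simp add: Cyl_def)
  finally show ?thesis .
qed

lemma Mstd_fin: "emeasure Mstd A \<noteq> top"
proof -
  interpret prob_space Mstd by (rule prob_Mstd)
  have "emeasure Mstd A \<le> emeasure Mstd (space Mstd)" by (rule emeasure_space)
  then show ?thesis using emeasure_space_1 by (auto simp: top_unique)
qed

lemma Linf_sets [measurable]: "Linf \<in> sets Linf_M"
  using sets.top[of Linf_M] by simp

lemma measurable_Mstd [simp]: "measurable Mstd N = measurable Linf_M N"
  by (rule measurable_cong_sets) auto

lemma restricted_eq:
  assumes lk: "l = (a, b, k)" "length k = a"
  shows "density Mstd (indicator (Cyl k)) =
    density (distr Mstd Linf_M (pre_std l)) (\<lambda>_. ennreal ((1/2) ^ a))"
proof (rule Linf_measure_eq)
  have l: "l \<in> Lam" using lk by (simp add: Lam_def)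
  show "sets (density Mstd (indicator (Cyl k))) = sets Linf_M" by simp
  show "sets (density (distr Mstd Linf_M (pre_std l)) (\<lambda>_. ennreal ((1/2) ^ a))) = sets Linf_M" by simp
  show "emeasure (density Mstd (indicator (Cyl k))) Linf \<noteq> \<infinity>"
    by (subst emeasure_restricted) (simp_all add: Mstd_fin)
  fix k'
  let ?k'' = "map (\<lambda>j. k' ! (j + a) \<noteq> odd b) [0..<length k' - a]"
  have pre: "pre_std l -` Cyl k' \<inter> Linf = (if (\<forall>j<min (length k') a. k ! j = k' ! j) then Cyl ?k'' else {})"
  proof (cases "\<forall>j<min (length k') a. k ! j = k' ! j")
    case True
    have "x \<in> Linf" if "x \<in> Cyl kk" for x kk using that by (simp add: Cyl_def)
    then have "pre_std l -` Cyl k' \<inter> Linf = Cyl ?k''"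
      using pre_Cyl_iff[OF lk] True by auto
    then show ?thesis using True by simp
  next
    case False
    then have "pre_std l -` Cyl k' \<inter> Linf = {}"
      using pre_Cyl_iff[OF lk] by auto
    then show ?thesis using False by (simp only: if_False)
  qed
  have "emeasure (density (distr Mstd Linf_M (pre_std l)) (\<lambda>_. ennreal ((1/2) ^ a))) (Cyl k')
      = ennreal ((1/2) ^ a) * emeasure Mstd (pre_std l -` Cyl k' \<inter> Linf)"
    by (simp add: emeasure_density_const emeasure_distr pre_meas[OF l])
  also have "\<dots> = emeasure Mstd (Cyl k \<inter> Cyl k')"
  proof (cases "\<forall>j<min (length k') a. k ! j = k' ! j")
    case True
    have "Cyl k \<inter> Cyl k' = Cyl (if length k \<le> length k' then k' else k)"
      using Cyl_Int_le[of k k'] Cyl_Int_le[of k' k] True lk by (auto simp: Int_commute)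
    then have "emeasure Mstd (Cyl k \<inter> Cyl k') = ennreal ((1/2) ^ max a (length k'))"
      using lk by (simp add: Mstd_Cyl max_def)
    moreover have "(1/2::real) ^ a * (1/2) ^ (length k' - a) = (1/2) ^ max a (length k')"
      by (simp add: power_add[symmetric] max_def)
    ultimately show ?thesis using True pre by (simp add: Mstd_Cyl ennreal_mult'[symmetric])
  next
    case False
    then have "Cyl k \<inter> Cyl k' = {}"
      using lk by (auto simp: Cyl_def)
    moreover have "pre_std l -` Cyl k' \<inter> Linf = {}" using pre by (simp only: if_not_P[OF False])
    ultimately show ?thesis by simp
  qed
  also have "\<dots> = emeasure (density Mstd (indicator (Cyl k))) (Cyl k')"
    by (simp add: emeasure_restricted)
  finally show "emeasure (density Mstd (indicator (Cyl k))) (Cyl k') =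
      emeasure (density (distr Mstd Linf_M (pre_std l)) (\<lambda>_. ennreal ((1/2) ^ a))) (Cyl k')" ..
qed

lemma Zc_Lam_Cyl: "l = (a, b, k) \<Longrightarrow> length k = a \<Longrightarrow> Zc l = Cyl k" by (rule Zc_Cyl)

lemma scale_integral:
  assumes lk: "l = (a, b, k)" "length k = a" and f: "f \<in> borel_measurable Linf_M"
  shows "(\<integral>\<^sup>+ x. indicator (Cyl k) x * f x \<partial>Mstd) = ennreal ((1/2) ^ a) * (\<integral>\<^sup>+ x. f (pre_std l x) \<partial>Mstd)"
proof -
  have l: "l \<in> Lam" using lk by (simp add: Lam_def)
  have "(\<integral>\<^sup>+ x. indicator (Cyl k) x * f x \<partial>Mstd) = integral\<^sup>N (density Mstd (indicator (Cyl k))) f"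
    using nn_integral_density[of "indicator (Cyl k)" Mstd f] f by simp
  also have "\<dots> = integral\<^sup>N (density (distr Mstd Linf_M (pre_std l)) (\<lambda>_. ennreal ((1/2) ^ a))) f"
    by (simp add: restricted_eq[OF lk])
  also have "\<dots> = (\<integral>\<^sup>+ x. ennreal ((1/2) ^ a) * f x \<partial>distr Mstd Linf_M (pre_std l))"
    using f by (simp add: nn_integral_density)
  also have "\<dots> = ennreal ((1/2) ^ a) * integral\<^sup>N (distr Mstd Linf_M (pre_std l)) f"
    using f by (simp add: nn_integral_cmult)
  also have "\<dots> = ennreal ((1/2) ^ a) * (\<integral>\<^sup>+ x. f (pre_std l x) \<partial>Mstd)"
    using f by (simp add: nn_integral_distr pre_meas[OF l])
  finally show ?thesis .
qed

lemma code_pre: "l \<in> Lam \<Longrightarrow> y \<in> Linf \<Longrightarrow> code_std (deg l) (pre_std l y) = y"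
proof -
  assume l: "l \<in> Lam" and y: "y \<in> Linf"
  obtain a b k where lk: "l = (a, b, k)" "length k = a" using l by (rule Lam_cases)
  have "code_std (deg l) (pre_std l y) = X (shiftc (a,b) (prefc l (bl y)))"
    by (simp only: pre_Linf[OF l y] code_X) (simp add: deg_def lk)
  also have "\<dots> = X (bl y)" by (simp add: shiftc_prefc[OF lk(1)])
  also have "\<dots> = y" by (rule Linf_X_bl[OF y])
  finally show ?thesis .
qed

lemma pre_code: 
  assumes lk: "l = (a, b, k)" "length k = a" and x: "x \<in> Cyl k"
  shows "pre_std l (code_std (deg l) x) = x"
proof -
  have l: "l \<in> Lam" using lk by (simp add: Lam_def)
  have xL: "x \<in> Linf" using x Cyl_sub by auto
  have "prefc l (shiftc (a, b) (bl x)) = bl x"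
  proof (rule ext)
    fix j show "prefc l (shiftc (a, b) (bl x)) j = bl x j"
    proof (cases "j < a")
      case True then show ?thesis using x lk by (simp add: prefc_def Cyl_def)
    next
      case False then show ?thesis using lk by (cases "even b") (simp_all add: prefc_def shiftc_def)
    qed
  qed
  then show ?thesis
    using xL by (simp add: code_Linf deg_def lk pre_X[OF l, unfolded lk] Linf_X_bl)
qed

lemma pre_image:
  assumes lk: "l = (a, b, k)" "length k = a" and A: "A \<subseteq> Linf"
  shows "pre_std l ` A = Cyl k \<inter> code_std (a, b) -` A"
proof -
  have l: "l \<in> Lam" using lk by (simp add: Lam_def)
  have dl: "deg l = (a, b)" by (simp add: deg_def lk)
  show ?thesis
  proof (intro subset_antisym subsetI)
    fix x assume "x \<in> pre_std l ` A"
    then obtain y where y: "y \<in> A" "x = pre_std l y" by auto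
    have yL: "y \<in> Linf" using y A by auto
    have "x \<in> Cyl k"
      using y(2) pre_X[OF l, of "bl y"] Linf_X_bl[OF yL] X_Cyl[of "prefc l (bl y)" k]
      by (simp add: prefc_def lk)
    moreover have "code_std (a, b) x \<in> A" using code_pre[OF l yL] y dl by simp
    ultimately show "x \<in> Cyl k \<inter> code_std (a, b) -` A" by simp
  next
    fix x assume x: "x \<in> Cyl k \<inter> code_std (a, b) -` A"
    then have "x = pre_std l (code_std (a, b) x)" using pre_code[OF lk] dl by simp
    then show "x \<in> pre_std l ` A" using x by blast
  qed
qed

lemma pre_image_sets:
  assumes l: "l \<in> Lam" and A: "A \<in> sets Linf_M"
  shows "pre_std l ` A \<in> sets Linf_M"
proof -
  obtain a b k where lk: "l = (a, b, k)" "length k = a" using l by (rule Lam_cases)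
  have AL: "A \<subseteq> Linf" using sets.sets_into_space[OF A] by simp
  have "Cyl k \<inter> code_std (a, b) -` A = Cyl k \<inter> (code_std (a, b) -` A \<inter> space Linf_M)"
    using Cyl_sub by auto
  also have "\<dots> \<in> sets Linf_M" by (rule sets.Int[OF Cyl_sets measurable_sets[OF code_meas A]])
  finally show ?thesis using pre_image[OF lk AL] by simp
qed

lemma pre_image_measure:
  assumes l: "l \<in> Lam" and A: "A \<in> sets Linf_M" and H: "H \<in> borel_measurable Linf_M"
  shows "(\<integral>\<^sup>+ x. H x * indicator (pre_std l ` A) x \<partial>Mstd) =
       ennreal ((1/2) ^ fst l) * (\<integral>\<^sup>+ x. H (pre_std l x) * indicator A x \<partial>Mstd)"
proof -
  obtain a b k where lk: "l = (a, b, k)" "length k = a" using l by (rule Lam_cases)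
  have AL: "A \<subseteq> Linf" using sets.sets_into_space[OF A] by simp
  have dl: "deg l = (a, b)" by (simp add: deg_def lk)
  have "(\<integral>\<^sup>+ x. H x * indicator (pre_std l ` A) x \<partial>Mstd)
     = (\<integral>\<^sup>+ x. indicator (Cyl k) x * (H x * indicator A (code_std (a, b) x)) \<partial>Mstd)"
    by (rule nn_integral_cong) (simp add: pre_image[OF lk AL] indicator_def)
  also have "\<dots> = ennreal ((1/2) ^ a) * (\<integral>\<^sup>+ x. H (pre_std l x) * indicator A (code_std (a, b) (pre_std l x)) \<partial>Mstd)"
    by (rule scale_integral[OF lk]) (use H A in measurable)
  also have "(\<integral>\<^sup>+ x. H (pre_std l x) * indicator A (code_std (a, b) (pre_std l x)) \<partial>Mstd)
      = (\<integral>\<^sup>+ x. H (pre_std l x) * indicator A x \<partial>Mstd)"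
    by (rule nn_integral_cong) (simp add: code_pre[OF l, unfolded dl] pre_in_Linf[OF l])
  finally show ?thesis using lk by simp
qed


lemma rs_space: "restrict_space M (space M) = M"
proof (rule measure_eqI)
  show "sets (restrict_space M (space M)) = sets M"
    by (auto simp: sets_restrict_space_iff) (meson sets.sets_into_space subsetD)
  fix A assume "A \<in> sets (restrict_space M (space M))"
  then have "A \<subseteq> space M" using sets.sets_into_space by (auto simp: sets_restrict_space_iff)
  then show "emeasure (restrict_space M (space M)) A = emeasure M A"
    by (rule emeasure_restrict_space[rotated]) simp
qed

lemma D_std_eq: "D_std l = Linf"
proof -
  have "vtx = (0, 0, [])" by (simp add: vtx_def)
  then have "Zc vtx = Cyl []" by (rule Zc_Cyl) simp
  then show ?thesis by (simp add: D_std_def src_def Cyl_Nil)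
qed

definition dens :: "(ipath \<Rightarrow> real) \<Rightarrow> ipath measure" where
  "dens H = density Mstd (\<lambda>x. ennreal (H x))"

definition good :: "(ipath \<Rightarrow> real) \<Rightarrow> bool" where
  "good H \<longleftrightarrow> H \<in> borel_measurable Linf_M \<and> (\<exists>c0 C0. 0 < c0 \<and> (\<forall>x\<in>Linf. c0 \<le> H x \<and> H x \<le> C0))"

lemma good_pos: "good H \<Longrightarrow> x \<in> Linf \<Longrightarrow> 0 < H x"
  unfolding good_def by (meson less_le_trans)

lemma good_meas: "good H \<Longrightarrow> H \<in> borel_measurable Linf_M"
  unfolding good_def by blast

lemma sets_dens [simp]: "sets (dens H) = sets Linf_M" and space_dens [simp]: "space (dens H) = Linf"
  by (simp_all add: dens_def)

lemma measurable_dens [simp]: "measurable (dens H) N = measurable Linf_M N"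
  by (rule measurable_cong_sets) auto

lemma finite_dens:
  assumes "good H" shows "finite_measure (dens H)"
proof
  obtain c0 C0 where b: "\<forall>x\<in>Linf. c0 \<le> H x \<and> H x \<le> C0" using assms unfolding good_def by blast
  have Hm: "H \<in> borel_measurable Linf_M" using good_meas[OF assms] .
  have "emeasure (dens H) (space (dens H)) = (\<integral>\<^sup>+ x. ennreal (H x) * indicator Linf x \<partial>Mstd)"
    unfolding dens_def using Hm by (simp add: emeasure_density)
  also have "\<dots> \<le> (\<integral>\<^sup>+ x. ennreal C0 \<partial>Mstd)"
    by (rule nn_integral_mono) (use b in \<open>auto intro!: ennreal_leI simp: indicator_def\<close>)
  also have "\<dots> = ennreal C0 * emeasure Mstd Linf" by simp
  also have "\<dots> < \<infinity>" using Mstd_fin[of Linf] by (simp add: ennreal_mult_less_top top.not_eq_extremum)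
  finally show "emeasure (dens H) (space (dens H)) \<noteq> \<infinity>" by simp
qed

lemma AE_dens:
  assumes "good H" shows "(AE x in dens H. P x) \<longleftrightarrow> (AE x in Mstd. P x)"
proof -
  have Hm: "H \<in> borel_measurable Linf_M" using good_meas[OF assms] .
  have "(AE x in dens H. P x) \<longleftrightarrow> (AE x in Mstd. 0 < ennreal (H x) \<longrightarrow> P x)"
    unfolding dens_def using Hm by (intro AE_density) simp
  also have "\<dots> \<longleftrightarrow> (AE x in Mstd. P x)"
  proof
    assume "AE x in Mstd. 0 < ennreal (H x) \<longrightarrow> P x"
    then show "AE x in Mstd. P x" using AE_space
      by eventually_elim (use good_pos[OF assms] in auto)
  qed (auto elim: eventually_mono)
  finally show ?thesis .
qed

lemma null_dens:
  assumes "good H" shows "null_sets (dens H) = null_sets Mstd"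
proof -
  have Hm: "H \<in> borel_measurable Linf_M" using good_meas[OF assms] .
  have "A \<in> null_sets (dens H) \<longleftrightarrow> A \<in> null_sets Mstd" for A
  proof -
    have "A \<in> null_sets (dens H) \<longleftrightarrow> A \<in> sets Mstd \<and> (AE x in Mstd. x \<in> A \<longrightarrow> ennreal (H x) = 0)"
      unfolding dens_def using Hm by (intro null_sets_density_iff) simp
    also have "\<dots> \<longleftrightarrow> A \<in> sets Mstd \<and> (AE x in Mstd. x \<notin> A)"
    proof -
      have "(AE x in Mstd. x \<in> A \<longrightarrow> ennreal (H x) = 0) \<longleftrightarrow> (AE x in Mstd. x \<notin> A)"
      proof (rule AE_cong)
        fix x assume "x \<in> space Mstd"
        then show "(x \<in> A \<longrightarrow> ennreal (H x) = 0) \<longleftrightarrow> x \<notin> A" using good_pos[OF assms, of x] by auto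
      qed
      then show ?thesis by simp
    qed
    also have "\<dots> \<longleftrightarrow> A \<in> null_sets Mstd" using AE_iff_null_sets by blast
    finally show ?thesis .
  qed
  then show ?thesis by blast
qed

definition phif :: "(ipath \<Rightarrow> real) \<Rightarrow> path \<Rightarrow> ipath \<Rightarrow> real" where
  "phif H l x = (1/2) ^ fst l * H (pre_std l x) / H x"

lemma pullback_dens:
  assumes g: "good H" and l: "l \<in> Lam"
  shows "pullback (dens H) (D_std l) (pre_std l) = density (dens H) (\<lambda>x. ennreal (phif H l x))"
proof -
  have Hm[measurable]: "H \<in> borel_measurable Linf_M" using good_meas[OF g] .
  have [measurable]: "pre_std l \<in> measurable Linf_M Linf_M" using l by (rule pre_meas)
  let ?c = "(1/2::real) ^ fst l"
  have fm: "(\<lambda>x. ennreal (phif H l x)) \<in> borel_measurable Linf_M" unfolding phif_def by measurable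
  have rs: "restrict_space (dens H) Linf = dens H" using rs_space[of "dens H"] by simp
  have eq: "emeasure (dens H) (pre_std l ` A) = emeasure (density (dens H) (\<lambda>x. ennreal (phif H l x))) A"
    if A: "A \<in> sets Linf_M" for A
  proof -
    have "emeasure (dens H) (pre_std l ` A) = (\<integral>\<^sup>+ x. ennreal (H x) * indicator (pre_std l ` A) x \<partial>Mstd)"
      unfolding dens_def using pre_image_sets[OF l A] by (simp add: emeasure_density)
    also have "\<dots> = ennreal ?c * (\<integral>\<^sup>+ x. ennreal (H (pre_std l x)) * indicator A x \<partial>Mstd)"
      by (rule pre_image_measure[OF l A]) measurable
    also have "\<dots> = (\<integral>\<^sup>+ x. ennreal ?c * (ennreal (H (pre_std l x)) * indicator A x) \<partial>Mstd)"
      using A by (simp add: nn_integral_cmult)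
    also have "\<dots> = (\<integral>\<^sup>+ x. ennreal (H x) * (ennreal (phif H l x) * indicator A x) \<partial>Mstd)"
    proof (rule nn_integral_cong)
      fix x assume "x \<in> space Mstd"
      then have x: "x \<in> Linf" by simp
      have p1: "0 < H x" using good_pos[OF g x] .
      have p2: "0 < H (pre_std l x)" using good_pos[OF g pre_in_Linf[OF l x]] .
      have "ennreal (H x) * ennreal (phif H l x) = ennreal (H x * phif H l x)"
        by (rule ennreal_mult[symmetric]) (use p1 p2 in \<open>auto simp: phif_def\<close>)
      also have "H x * phif H l x = ?c * H (pre_std l x)" using p1 by (simp add: phif_def)
      also have "ennreal (?c * H (pre_std l x)) = ennreal ?c * ennreal (H (pre_std l x))"
        by (rule ennreal_mult) (use p2 in auto)
      finally show "ennreal ?c * (ennreal (H (pre_std l x)) * indicator A x) =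
          ennreal (H x) * (ennreal (phif H l x) * indicator A x)" by (metis mult.assoc)
    qed
    also have "\<dots> = integral\<^sup>N (dens H) (\<lambda>x. ennreal (phif H l x) * indicator A x)"
    proof -
      have "(\<lambda>x. ennreal (phif H l x) * indicator A x) \<in> borel_measurable Linf_M" using fm A by measurable
      then show ?thesis unfolding dens_def by (subst nn_integral_density) simp_all
    qed
    also have "\<dots> = emeasure (density (dens H) (\<lambda>x. ennreal (phif H l x))) A"
      using A fm by (subst emeasure_density) auto
    finally show ?thesis .
  qed
  have "pullback (dens H) (D_std l) (pre_std l) = measure_of Linf (sets Linf_M) (\<lambda>A. emeasure (dens H) (pre_std l ` A))"
    unfolding pullback_def D_std_eq rs by simp
  also have "\<dots> = measure_of Linf (sets Linf_M) (emeasure (density (dens H) (\<lambda>x. ennreal (phif H l x))))"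
  proof (rule measure_of_eq)
    show "sets Linf_M \<subseteq> Pow Linf" using sets.sets_into_space[of _ Linf_M] by auto
    fix a assume "a \<in> sigma_sets Linf (sets Linf_M)"
    then have "a \<in> sets Linf_M" using sets.sigma_sets_eq[of Linf_M] by simp
    then show "emeasure (dens H) (pre_std l ` a) = emeasure (density (dens H) (\<lambda>x. ennreal (phif H l x))) a"
      by (rule eq)
  qed
  also have "\<dots> = density (dens H) (\<lambda>x. ennreal (phif H l x))"
    using measure_of_of_measure[of "density (dens H) (\<lambda>x. ennreal (phif H l x))"] by simp
  finally show ?thesis .
qed

lemma Phi_dens:
  assumes g: "good H" and l: "l \<in> Lam"
  shows "AE x in dens H. Phi (dens H) D_std pre_std l x = ennreal (phif H l x)"
proof -
  have Hm[measurable]: "H \<in> borel_measurable Linf_M" using good_meas[OF g] .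
  have [measurable]: "pre_std l \<in> measurable Linf_M Linf_M" using l by (rule pre_meas)
  interpret finite_measure "dens H" using finite_dens[OF g] .
  have rs: "restrict_space (dens H) (D_std l) = dens H" using rs_space[of "dens H"] by (simp add: D_std_eq)
  have fm: "(\<lambda>x. ennreal (phif H l x)) \<in> borel_measurable Linf_M" unfolding phif_def by measurable
  then have fm': "(\<lambda>x. ennreal (phif H l x)) \<in> borel_measurable (dens H)" by simp
  have "AE x in dens H. ennreal (phif H l x) = RN_deriv (dens H) (density (dens H) (\<lambda>x. ennreal (phif H l x))) x"
    by (rule RN_deriv_unique[OF fm' refl])
  then show ?thesis unfolding Phi_def rs pullback_dens[OF g l] by (auto elim: eventually_mono)
qed


lemma comp_Lam: "l \<in> Lam \<Longrightarrow> \<nu> \<in> Lam \<Longrightarrow> comp l \<nu> \<in> Lam"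
  by (auto simp: Lam_def comp_def)

lemma pre_comp: "l \<in> Lam \<Longrightarrow> \<nu> \<in> Lam \<Longrightarrow> x \<in> Linf \<Longrightarrow> pre_std l (pre_std \<nu> x) = pre_std (comp l \<nu>) x"
  by (simp add: pre_Linf[of \<nu> x] pre_Linf[of "comp l \<nu>" x] pre_X prefc_comp comp_Lam)

lemma pre_range: "l \<in> Lam \<Longrightarrow> pre_std l ` Linf = Zc l"
proof -
  assume l: "l \<in> Lam"
  obtain a b k where lk: "l = (a, b, k)" "length k = a" using l by (rule Lam_cases)
  have "code_std (a, b) x \<in> Linf" if "x \<in> Linf" for x using that code_Linf X_in_Linf by metis
  then have "Cyl k \<inter> code_std (a, b) -` Linf = Cyl k" using Cyl_sub by auto
  then show ?thesis using pre_image[OF lk order_refl] Zc_Cyl[OF lk] by simp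
qed

lemma code_code: "code_std m (code_std n x) = code_std (m + n) x"
  by (rule ext)+ (simp add: code_std_def add.assoc less_eq_prod_def)

lemma pre_vtx: "x \<in> Linf \<Longrightarrow> pre_std vtx x = x"
proof -
  assume x: "x \<in> Linf"
  have v: "vtx \<in> Lam" by (simp add: vtx_def Lam_def)
  have "prefc vtx (bl x) = bl x" by (rule ext) (simp add: prefc_def vtx_def)
  then show ?thesis using pre_Linf[OF v x] Linf_X_bl[OF x] by simp
qed

lemma Linf_not_null: "Linf \<notin> null_sets Mstd"
  using Mstd_Cyl[of "[]"] by (simp add: Cyl_Nil null_sets_def)

lemma measurable_dens2 [simp]: "measurable M (dens H) = measurable M Linf_M"
  by (rule measurable_cong_sets) auto

lemma Linf_Lam: "x \<in> Linf \<Longrightarrow> p \<le> q \<Longrightarrow> x p q \<in> Lam \<and> deg (x p q) = q - p"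
  unfolding Linf_def by blast

lemma SBFS_dens:
  assumes g: "good H"
  shows "SBFS (dens H) D_std pre_std code_std"
proof -
  have rs: "restrict_space (dens H) Linf = dens H" using rs_space[of "dens H"] by simp
  have Hm[measurable]: "H \<in> borel_measurable Linf_M" using good_meas[OF g] .
  show ?thesis unfolding SBFS_def D_std_eq rs
  proof (intro conjI ballI allI impI)
    fix l assume l: "l \<in> Lam"
    show "Linf \<in> sets (dens H)" by simp
    show "pre_std l \<in> dens H \<rightarrow>\<^sub>M dens H" using pre_meas[OF l] by simp
    fix A assume "A \<in> sets (dens H)"
    then show "pre_std l ` A \<in> sets (dens H)" using pre_image_sets[OF l] by simp
  next
    fix m show "code_std m \<in> dens H \<rightarrow>\<^sub>M dens H" using code_meas[of m] by simp
  next
    fix m :: "nat \<times> nat"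
    have "Linf \<subseteq> (\<Union>l\<in>Lam_deg m. pre_std l ` Linf)"
    proof
      fix x assume x: "x \<in> Linf"
      have "x 0 m \<in> Lam \<and> deg (x 0 m) = m - 0" by (rule Linf_Lam[OF x zero_le_pair])
      then have "x 0 m \<in> Lam_deg m" by (simp add: Lam_deg_def prod_eq_iff)
      moreover have "x \<in> Zc (x 0 m)"
      proof -
        have "deg (x 0 m) = m" using \<open>x 0 m \<in> Lam_deg m\<close> by (simp add: Lam_deg_def)
        then show ?thesis using x by (simp add: Zc_def)
      qed
      moreover have "x 0 m \<in> Lam" using \<open>x 0 m \<in> Lam_deg m\<close> by (simp add: Lam_deg_def)
      ultimately have "x 0 m \<in> Lam_deg m \<and> x \<in> pre_std (x 0 m) ` Linf" using pre_range[of "x 0 m"] by simp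
      then show "x \<in> (\<Union>l\<in>Lam_deg m. pre_std l ` Linf)" by blast
    qed
    then have e: "Linf - (\<Union>l\<in>Lam_deg m. pre_std l ` Linf) = {}" by auto
    show "space (dens H) - (\<Union>l\<in>Lam_deg m. pre_std l ` Linf) \<in> null_sets (dens H)" unfolding space_dens e by simp
  next
    fix m :: "nat \<times> nat" and l l' assume l: "l \<in> Lam_deg m" and l': "l' \<in> Lam_deg m" and ne: "l \<noteq> l'"
    have "Zc l \<inter> Zc l' = {}" using l l' ne by (auto simp: Zc_def Lam_deg_def)
    then show "pre_std l ` Linf \<inter> pre_std l' ` Linf \<in> null_sets (dens H)"
      using l l' pre_range by (simp add: Lam_deg_def)
  next
    fix l x assume "l \<in> Lam" "x \<in> Linf"
    then show "code_std (deg l) (pre_std l x) = x" by (rule code_pre)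
  next
    fix l assume l: "l \<in> Lam"
    show "absolutely_continuous (dens H) (pullback (dens H) Linf (pre_std l))"
    proof -
      have [measurable]: "pre_std l \<in> measurable Linf_M Linf_M" using l by (rule pre_meas)
      have fm: "(\<lambda>x. ennreal (phif H l x)) \<in> borel_measurable Linf_M" unfolding phif_def by measurable
      then have fm': "(\<lambda>x. ennreal (phif H l x)) \<in> borel_measurable (dens H)" by simp
      show ?thesis unfolding pullback_dens[OF g l, unfolded D_std_eq] by (rule absolutely_continuousI_density[OF fm'])
    qed
    show "AE x in dens H. 0 < Phi (dens H) (\<lambda>a. Linf) pre_std l x"
      using Phi_dens[OF g l] AE_space
    proof eventually_elim
      case (elim x)
      then have x: "x \<in> Linf" by simp
      have "0 < phif H l x" using good_pos[OF g x] good_pos[OF g pre_in_Linf[OF l x]]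
        by (simp add: phif_def)
      moreover have "D_std = (\<lambda>a. Linf)" by (rule ext) (simp add: D_std_eq)
      ultimately show ?case using elim(1) by (simp only:) (simp add: ennreal_less_zero_iff)
    qed
  next
    fix x assume "x \<in> Linf" then show "pre_std vtx x = x" by (rule pre_vtx)
  next
    show "0 < emeasure (dens H) Linf"
    proof -
      have "Linf \<notin> null_sets (dens H)" using Linf_not_null null_dens[OF g] by simp
      then show ?thesis by (metis Linf_sets null_setsI sets_dens not_gr_zero)
    qed
  next
    fix l \<nu> assume l: "l \<in> Lam" and \<nu>: "\<nu> \<in> Lam"
    show "pre_std \<nu> ` Linf \<subseteq> Linf" using pre_in_Linf[OF \<nu>] by auto
    show "AE x in dens H. pre_std l (pre_std \<nu> x) = pre_std (comp l \<nu>) x"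
      using AE_space by eventually_elim (simp add: pre_comp l \<nu>)
  next
    fix m n x show "code_std m (code_std n x) = code_std (m + n) x" by (rule code_code)
  qed
qed


lemma alg_sqrt:
  fixes a b c d e :: real
  assumes "0 < a" "0 < b" "0 < c" "0 < d" "0 < e"
  shows "sqrt (a / b) * (c * a / d) powr (-1/2) = (c * b / e) powr (-1/2) * sqrt (d / e)"
proof -
  have p: "x powr (-1/2) = inverse (sqrt x)" if "0 \<le> x" for x :: real
  proof -
    have "x powr (-1/2) = x powr (-(1/2))" by simp
    also have "\<dots> = inverse (x powr (1/2))" by (rule powr_minus)
    also have "\<dots> = inverse (sqrt x)" using that by (simp add: powr_half_sqrt)
    finally show ?thesis .
  qed
  have q: "sqrt x * inverse (sqrt y) = sqrt (x / y)" for x y :: real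
    by (simp add: divide_inverse real_sqrt_mult real_sqrt_inverse)
  have r1: "(a / b) / (c * a / d) = d / (b * c)" using assms by (simp add: field_simps)
  have r2: "(d / e) / (c * b / e) = d / (b * c)" using assms by (simp add: field_simps)
  have "sqrt (a / b) * (c * a / d) powr (-1/2) = sqrt (a / b) * inverse (sqrt (c * a / d))"
    using assms by (simp only: p less_imp_le divide_pos_pos mult_pos_pos)
  also have "\<dots> = sqrt (d / (b * c))" by (simp only: q r1)
  also have "\<dots> = sqrt (d / e) * inverse (sqrt (c * b / e))" by (simp only: q r2)
  also have "\<dots> = (c * b / e) powr (-1/2) * sqrt (d / e)"
    using assms by (simp only: p less_imp_le divide_pos_pos mult_pos_pos mult.commute)
  finally show ?thesis .
qed

definition wf :: "(ipath \<Rightarrow> real) \<Rightarrow> (ipath \<Rightarrow> real) \<Rightarrow> ipath \<Rightarrow> real" where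
  "wf H1 H2 y = sqrt (H1 y / H2 y)"

definition Umap :: "(ipath \<Rightarrow> real) \<Rightarrow> (ipath \<Rightarrow> real) \<Rightarrow> (ipath \<Rightarrow> complex) \<Rightarrow> ipath \<Rightarrow> complex" where
  "Umap H1 H2 \<xi> y = complex_of_real (wf H1 H2 y) * \<xi> y"

lemma L2_iff:
  assumes g: "good H"
  shows "\<xi> \<in> L2 (dens H) \<longleftrightarrow> \<xi> \<in> borel_measurable Linf_M \<and>
     integrable Mstd (\<lambda>x. H x * (cmod (\<xi> x))\<^sup>2)"
proof -
  have Hm[measurable]: "H \<in> borel_measurable Linf_M" using good_meas[OF g] .
  have nn: "AE x in Mstd. 0 \<le> H x" using AE_space by eventually_elim (use good_pos[OF g] in \<open>auto simp: less_imp_le\<close>)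
  show ?thesis
  proof (cases "\<xi> \<in> borel_measurable Linf_M")
    case True
    then have [measurable]: "\<xi> \<in> borel_measurable Mstd" by simp
    have "integrable (dens H) (\<lambda>x. (cmod (\<xi> x))\<^sup>2) \<longleftrightarrow> integrable Mstd (\<lambda>x. H x *\<^sub>R (cmod (\<xi> x))\<^sup>2)"
      unfolding dens_def by (rule integrable_density) (use nn True in auto)
    then show ?thesis using True by (simp add: L2_def)
  qed (simp add: L2_def)
qed

lemma L2_norm:
  assumes g: "good H" and \<xi>: "\<xi> \<in> borel_measurable Linf_M"
  shows "(\<integral>x. (cmod (\<xi> x))\<^sup>2 \<partial>dens H) = (\<integral>x. H x * (cmod (\<xi> x))\<^sup>2 \<partial>Mstd)"
proof -
  have Hm[measurable]: "H \<in> borel_measurable Linf_M" using good_meas[OF g] .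
  have [measurable]: "\<xi> \<in> borel_measurable Mstd" using \<xi> by simp
  have nn: "AE x in Mstd. 0 \<le> H x" using AE_space by eventually_elim (use good_pos[OF g] in \<open>auto simp: less_imp_le\<close>)
  show ?thesis unfolding dens_def by (subst integral_density) (use nn \<xi> in auto)
qed

lemma wf_pos: "good H1 \<Longrightarrow> good H2 \<Longrightarrow> x \<in> Linf \<Longrightarrow> 0 < wf H1 H2 x"
  unfolding wf_def using good_pos by auto

lemma wf_meas: "good H1 \<Longrightarrow> good H2 \<Longrightarrow> wf H1 H2 \<in> borel_measurable Linf_M"
proof -
  assume "good H1" "good H2"
  then have [measurable]: "H1 \<in> borel_measurable Linf_M" "H2 \<in> borel_measurable Linf_M" by (simp_all add: good_meas)
  show ?thesis unfolding wf_def[abs_def] by measurable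
qed

lemma Umap_L2:
  assumes g1: "good H1" and g2: "good H2" and \<xi>: "\<xi> \<in> L2 (dens H1)"
  shows "Umap H1 H2 \<xi> \<in> L2 (dens H2)"
    and "(\<integral>y. (cmod (Umap H1 H2 \<xi> y))\<^sup>2 \<partial>dens H2) = (\<integral>x. (cmod (\<xi> x))\<^sup>2 \<partial>dens H1)"
proof -
  have xm[measurable]: "\<xi> \<in> borel_measurable Linf_M" and int: "integrable Mstd (\<lambda>x. H1 x * (cmod (\<xi> x))\<^sup>2)"
    using \<xi> L2_iff[OF g1] by auto
  have [measurable]: "wf H1 H2 \<in> borel_measurable Linf_M" using g1 g2 by (rule wf_meas)
  have um[measurable]: "Umap H1 H2 \<xi> \<in> borel_measurable Linf_M" unfolding Umap_def[abs_def] by measurable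
  have eq: "H2 x * (cmod (Umap H1 H2 \<xi> x))\<^sup>2 = H1 x * (cmod (\<xi> x))\<^sup>2" if x: "x \<in> Linf" for x
  proof -
    have p1: "0 < H1 x" "0 < H2 x" using good_pos[OF g1 x] good_pos[OF g2 x] by auto
    have "(cmod (Umap H1 H2 \<xi> x))\<^sup>2 = (wf H1 H2 x)\<^sup>2 * (cmod (\<xi> x))\<^sup>2"
      by (simp add: Umap_def norm_mult power_mult_distrib)
    also have "(wf H1 H2 x)\<^sup>2 = H1 x / H2 x" using p1 by (simp add: wf_def)
    finally show ?thesis using p1 by simp
  qed
  have "integrable Mstd (\<lambda>x. H2 x * (cmod (Umap H1 H2 \<xi> x))\<^sup>2) \<longleftrightarrow> integrable Mstd (\<lambda>x. H1 x * (cmod (\<xi> x))\<^sup>2)"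
    by (rule Bochner_Integration.integrable_cong) (simp_all add: eq)
  then have "integrable Mstd (\<lambda>x. H2 x * (cmod (Umap H1 H2 \<xi> x))\<^sup>2)" using int by simp
  then show "Umap H1 H2 \<xi> \<in> L2 (dens H2)" using L2_iff[OF g2] um by simp
  show "(\<integral>y. (cmod (Umap H1 H2 \<xi> y))\<^sup>2 \<partial>dens H2) = (\<integral>x. (cmod (\<xi> x))\<^sup>2 \<partial>dens H1)"
    unfolding L2_norm[OF g2 um] L2_norm[OF g1 xm] by (rule Bochner_Integration.integral_cong) (simp_all add: eq)
qed


lemma code_in_Linf: "y \<in> Linf \<Longrightarrow> code_std m y \<in> Linf"
  using code_Linf X_in_Linf by metis

lemma pre_code': "l \<in> Lam \<Longrightarrow> y \<in> Zc l \<Longrightarrow> pre_std l (code_std (deg l) y) = y"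
proof -
  assume l: "l \<in> Lam" and y: "y \<in> Zc l"
  obtain a b k where lk: "l = (a, b, k)" "length k = a" using l by (rule Lam_cases)
  show ?thesis using pre_code[OF lk] y Zc_Cyl[OF lk] by simp
qed

lemma Zc_sub_Linf: "y \<in> Zc l \<Longrightarrow> y \<in> Linf"
  by (simp add: Zc_def)

lemma pre_null:
  assumes l: "l \<in> Lam" and N: "N \<in> null_sets Mstd"
  shows "pre_std l ` N \<in> null_sets Mstd"
proof -
  have Ns: "N \<in> sets Linf_M" using N by (simp add: null_sets_def)
  have s: "pre_std l ` N \<in> sets Linf_M" by (rule pre_image_sets[OF l Ns])
  have "emeasure Mstd (pre_std l ` N) = (\<integral>\<^sup>+ x. (\<lambda>_. 1) x * indicator (pre_std l ` N) x \<partial>Mstd)"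
    using s by simp
  also have "\<dots> = ennreal ((1/2) ^ fst l) * (\<integral>\<^sup>+ x. (\<lambda>_. 1) (pre_std l x) * indicator N x \<partial>Mstd)"
    by (rule pre_image_measure[OF l Ns]) simp
  also have "\<dots> = ennreal ((1/2) ^ fst l) * emeasure Mstd N" using Ns by simp
  also have "\<dots> = 0" using N by (simp add: null_setsD1)
  finally show ?thesis using s by (simp add: null_sets_def)
qed

lemma AE_shift:
  assumes l: "l \<in> Lam" and P: "AE x in Mstd. P x"
  shows "AE y in Mstd. y \<in> Zc l \<longrightarrow> P (code_std (deg l) y)"
proof -
  obtain N where N: "{x \<in> space Mstd. \<not> P x} \<subseteq> N" "N \<in> null_sets Mstd" using P by (auto simp: eventually_ae_filter)
  show ?thesis
  proof (rule AE_I'[OF pre_null[OF l N(2)]])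
    show "{y \<in> space Mstd. \<not> (y \<in> Zc l \<longrightarrow> P (code_std (deg l) y))} \<subseteq> pre_std l ` N"
    proof
      fix y assume y: "y \<in> {y \<in> space Mstd. \<not> (y \<in> Zc l \<longrightarrow> P (code_std (deg l) y))}"
      then have yz: "y \<in> Zc l" and nP: "\<not> P (code_std (deg l) y)" by auto
      have "code_std (deg l) y \<in> N" using N(1) nP code_in_Linf[OF Zc_sub_Linf[OF yz], of "deg l"] by auto
      moreover have "y = pre_std l (code_std (deg l) y)" using pre_code'[OF l yz] by simp
      ultimately show "y \<in> pre_std l ` N" by blast
    qed
  qed
qed

lemma std_rep_equiv_dens:
  assumes g1: "good H1" and g2: "good H2"
  shows "std_rep_equiv (dens H1) (dens H2)"
  unfolding std_rep_equiv_def
proof (intro exI conjI)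
  show "unitary_L2 (dens H1) (dens H2) (Umap H1 H2)"
    unfolding unitary_L2_def
  proof (intro conjI ballI allI impI)
    fix \<xi> assume "\<xi> \<in> L2 (dens H1)"
    then show "Umap H1 H2 \<xi> \<in> L2 (dens H2)" by (rule Umap_L2[OF g1 g2])
  next
    fix \<xi> \<eta> :: "ipath \<Rightarrow> complex" assume "AE x in dens H1. \<xi> x = \<eta> x"
    then have "AE x in Mstd. \<xi> x = \<eta> x" using AE_dens[OF g1] by simp
    then have "AE x in Mstd. Umap H1 H2 \<xi> x = Umap H1 H2 \<eta> x"
      by eventually_elim (simp add: Umap_def)
    then show "AE y in dens H2. Umap H1 H2 \<xi> y = Umap H1 H2 \<eta> y" using AE_dens[OF g2] by simp
  next
    fix \<xi> \<eta> :: "ipath \<Rightarrow> complex" and c :: complex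
    show "AE y in dens H2. Umap H1 H2 (\<lambda>x. c * \<xi> x + \<eta> x) y = c * Umap H1 H2 \<xi> y + Umap H1 H2 \<eta> y"
      by (rule AE_I2) (simp add: Umap_def algebra_simps)
  next
    fix \<xi> assume "\<xi> \<in> L2 (dens H1)"
    then show "(\<integral>y. (cmod (Umap H1 H2 \<xi> y))\<^sup>2 \<partial>dens H2) = (\<integral>x. (cmod (\<xi> x))\<^sup>2 \<partial>dens H1)"
      by (rule Umap_L2[OF g1 g2])
  next
    fix \<eta> assume \<eta>: "\<eta> \<in> L2 (dens H2)"
    have "Umap H2 H1 \<eta> \<in> L2 (dens H1)" by (rule Umap_L2[OF g2 g1 \<eta>])
    moreover have "AE y in dens H2. Umap H1 H2 (Umap H2 H1 \<eta>) y = \<eta> y"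
    proof (rule AE_I2)
      fix y assume "y \<in> space (dens H2)"
      then have y: "y \<in> Linf" by simp
      have p: "0 < H1 y" "0 < H2 y" using good_pos[OF g1 y] good_pos[OF g2 y] by auto
      have "wf H1 H2 y * wf H2 H1 y = 1"
        using p by (simp add: wf_def real_sqrt_mult[symmetric])
      then have "complex_of_real (wf H1 H2 y) * complex_of_real (wf H2 H1 y) = 1"
        by (metis of_real_1 of_real_mult)
      then show "Umap H1 H2 (Umap H2 H1 \<eta>) y = \<eta> y"
        by (simp add: Umap_def mult.assoc[symmetric])
    qed
    ultimately show "\<exists>\<xi>\<in>L2 (dens H1). AE y in dens H2. Umap H1 H2 \<xi> y = \<eta> y" by blast
  qed
next
  show "\<forall>l\<in>Lam. \<forall>\<xi>\<in>L2 (dens H1). AE y in dens H2.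
      Umap H1 H2 (sb_op (dens H1) D_std pre_std code_std l \<xi>) y = sb_op (dens H2) D_std pre_std code_std l (Umap H1 H2 \<xi>) y"
  proof (intro ballI)
    fix l \<xi> assume l: "l \<in> Lam" and \<xi>: "\<xi> \<in> L2 (dens H1)"
    let ?P = "\<lambda>x. Phi (dens H1) D_std pre_std l x = ennreal (phif H1 l x) \<and>
                 Phi (dens H2) D_std pre_std l x = ennreal (phif H2 l x)"
    have "AE x in Mstd. ?P x"
      using Phi_dens[OF g1 l] Phi_dens[OF g2 l] AE_dens[OF g1] AE_dens[OF g2] by auto
    then have "AE y in Mstd. y \<in> Zc l \<longrightarrow> ?P (code_std (deg l) y)" by (rule AE_shift[OF l])
    then have "AE y in Mstd. Umap H1 H2 (sb_op (dens H1) D_std pre_std code_std l \<xi>) y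
          = sb_op (dens H2) D_std pre_std code_std l (Umap H1 H2 \<xi>) y"
      using AE_space
    proof eventually_elim
      case (elim y)
      have rng: "pre_std l ` D_std l = Zc l" using pre_range[OF l] by (simp add: D_std_eq)
      show ?case
      proof (cases "y \<in> Zc l")
        case False
        then show ?thesis by (simp add: sb_op_def rng Umap_def)
      next
        case True
        let ?s = "code_std (deg l) y"
        have s: "?s \<in> Linf" using code_in_Linf[OF Zc_sub_Linf[OF True]] .
        have ps: "pre_std l ?s = y" using pre_code'[OF l True] .
        have yL: "y \<in> Linf" using Zc_sub_Linf[OF True] .
        have P: "?P ?s" using elim(1) True by blast
        let ?c = "(1/2::real) ^ fst l"
        have pos: "0 < H1 y" "0 < H2 y" "0 < ?c" "0 < H1 ?s" "0 < H2 ?s"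
          using good_pos[OF g1 yL] good_pos[OF g2 yL] good_pos[OF g1 s] good_pos[OF g2 s] by auto
        have ph: "phif H1 l ?s = ?c * H1 y / H1 ?s" "phif H2 l ?s = ?c * H2 y / H2 ?s"
          by (simp_all add: phif_def ps)
        have nn: "0 \<le> phif H1 l ?s" "0 \<le> phif H2 l ?s" using pos unfolding ph by auto
        have e1: "enn2real (Phi (dens H1) D_std pre_std l ?s) = ?c * H1 y / H1 ?s"
          using P nn ph by simp
        have e2: "enn2real (Phi (dens H2) D_std pre_std l ?s) = ?c * H2 y / H2 ?s"
          using P nn ph by simp
        have key: "wf H1 H2 y * (?c * H1 y / H1 ?s) powr (-1/2) = (?c * H2 y / H2 ?s) powr (-1/2) * wf H1 H2 ?s"
          unfolding wf_def by (rule alg_sqrt) (use pos in auto)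
        have "Umap H1 H2 (sb_op (dens H1) D_std pre_std code_std l \<xi>) y
            = complex_of_real (wf H1 H2 y * (?c * H1 y / H1 ?s) powr (-1/2)) * \<xi> ?s"
          using True by (simp add: sb_op_def rng Umap_def e1 mult.assoc)
        also have "\<dots> = complex_of_real ((?c * H2 y / H2 ?s) powr (-1/2) * wf H1 H2 ?s) * \<xi> ?s"
          by (simp only: key)
        also have "\<dots> = sb_op (dens H2) D_std pre_std code_std l (Umap H1 H2 \<xi>) y"
          using True by (simp add: sb_op_def rng Umap_def e2 mult.assoc)
        finally show ?thesis .
      qed
    qed
    then show "AE y in dens H2. Umap H1 H2 (sb_op (dens H1) D_std pre_std code_std l \<xi>) y
          = sb_op (dens H2) D_std pre_std code_std l (Umap H1 H2 \<xi>) y"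
      using AE_dens[OF g2] by simp
  qed
qed


definition qg :: "(nat \<Rightarrow> real) \<Rightarrow> nat \<Rightarrow> bool \<Rightarrow> real" where
  "qg \<gamma> j b = (if b = odd j then 1/2 + \<gamma> (Suc j) else 1/2 - \<gamma> (Suc j))"

definition Lg :: "(nat \<Rightarrow> real) \<Rightarrow> nat \<Rightarrow> bool \<Rightarrow> real" where
  "Lg \<gamma> j b = ln (2 * qg \<gamma> j b)"

definition Bg :: "(nat \<Rightarrow> real) \<Rightarrow> nat \<Rightarrow> real" where
  "Bg \<gamma> j = \<bar>ln (1 + 2 * \<bar>\<gamma> (Suc j)\<bar>)\<bar> + \<bar>ln (1 - 2 * \<bar>\<gamma> (Suc j)\<bar>)\<bar>"

lemma adm_bound: "admissible \<gamma> \<Longrightarrow> \<bar>\<gamma> (Suc j)\<bar> < 1/2"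
  unfolding admissible_def by auto

lemma qg_pos: "admissible \<gamma> \<Longrightarrow> 0 < qg \<gamma> j b"
  using adm_bound[of \<gamma> j] by (auto simp: qg_def)

lemma qg_sum: "qg \<gamma> j True + qg \<gamma> j False = 1"
  by (simp add: qg_def)

lemma Lg_bound: "admissible \<gamma> \<Longrightarrow> \<bar>Lg \<gamma> j b\<bar> \<le> Bg \<gamma> j"
proof -
  assume a: "admissible \<gamma>"
  have "2 * qg \<gamma> j b = 1 + 2 * \<bar>\<gamma> (Suc j)\<bar> \<or> 2 * qg \<gamma> j b = 1 - 2 * \<bar>\<gamma> (Suc j)\<bar>"
    by (auto simp: qg_def abs_if)
  then show ?thesis unfolding Lg_def Bg_def by auto
qed

lemma ln_small: "\<bar>x::real\<bar> \<le> 1/2 \<Longrightarrow> \<bar>ln (1 + x)\<bar> \<le> 2 * \<bar>x\<bar>"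
proof -
  assume x: "\<bar>x\<bar> \<le> 1/2"
  have "\<bar>ln (1 + x) - x\<bar> \<le> 2 * x\<^sup>2" using abs_ln_one_plus_x_minus_x_bound[OF x] .
  moreover have "2 * x\<^sup>2 \<le> \<bar>x\<bar>"
  proof -
    have "2 * x\<^sup>2 = (2 * \<bar>x\<bar>) * \<bar>x\<bar>" by (simp add: power2_eq_square)
    also have "\<dots> \<le> 1 * \<bar>x\<bar>" using x by (intro mult_right_mono) auto
    finally show ?thesis by simp
  qed
  ultimately show ?thesis by linarith
qed

lemma Bg_summable: "admissible \<gamma> \<Longrightarrow> summable (Bg \<gamma>)"
proof -
  assume a: "admissible \<gamma>"
  have s: "summable (\<lambda>n. \<bar>\<gamma> (Suc n)\<bar>)" using a by (simp add: admissible_def)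
  have "(\<lambda>n. \<bar>\<gamma> (Suc n)\<bar>) \<longlonglongrightarrow> 0" using summable_LIMSEQ_zero[OF s] .
  then have "eventually (\<lambda>n. \<bar>\<gamma> (Suc n)\<bar> < 1/4) sequentially"
    by (rule order_tendstoD) simp
  then obtain N where N: "\<And>n. n \<ge> N \<Longrightarrow> \<bar>\<gamma> (Suc n)\<bar> < 1/4" by (auto simp: eventually_sequentially)
  show ?thesis
  proof (rule summable_comparison_test'[OF summable_mult[OF s, of 8]])
    fix n assume "n \<ge> N"
    then have g: "\<bar>\<gamma> (Suc n)\<bar> < 1/4" by (rule N)
    have "\<bar>ln (1 + 2 * \<bar>\<gamma> (Suc n)\<bar>)\<bar> \<le> 2 * \<bar>2 * \<bar>\<gamma> (Suc n)\<bar>\<bar>" using g by (intro ln_small) auto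
    moreover have "\<bar>ln (1 + (- 2 * \<bar>\<gamma> (Suc n)\<bar>))\<bar> \<le> 2 * \<bar>- 2 * \<bar>\<gamma> (Suc n)\<bar>\<bar>" using g by (intro ln_small) auto
    ultimately show "norm (Bg \<gamma> n) \<le> 8 * \<bar>\<gamma> (Suc n)\<bar>" unfolding Bg_def by simp
  qed
qed

definition Kg :: "(nat \<Rightarrow> real) \<Rightarrow> real" where "Kg \<gamma> = suminf (Bg \<gamma>)"

definition Hn :: "(nat \<Rightarrow> real) \<Rightarrow> nat \<Rightarrow> ipath \<Rightarrow> real" where
  "Hn \<gamma> n x = (\<Prod>j<n. 2 * qg \<gamma> j (bl x j))"

definition Hg :: "(nat \<Rightarrow> real) \<Rightarrow> ipath \<Rightarrow> real" where
  "Hg \<gamma> x = exp (\<Sum>j. Lg \<gamma> j (bl x j))"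

lemma Lg_summable: "admissible \<gamma> \<Longrightarrow> summable (\<lambda>j. Lg \<gamma> j (c j))"
proof -
  assume a: "admissible \<gamma>"
  show ?thesis by (rule summable_comparison_test'[OF Bg_summable[OF a], where N=0]) (simp add: Lg_bound[OF a])
qed

lemma Lg_suminf_bound: "admissible \<gamma> \<Longrightarrow> \<bar>\<Sum>j. Lg \<gamma> j (c j)\<bar> \<le> Kg \<gamma>"
proof -
  assume a: "admissible \<gamma>"
  have sa: "summable (\<lambda>j. \<bar>Lg \<gamma> j (c j)\<bar>)"
    by (rule summable_comparison_test'[OF Bg_summable[OF a], where N=0]) (simp add: Lg_bound[OF a])
  have "\<bar>\<Sum>j. Lg \<gamma> j (c j)\<bar> \<le> (\<Sum>j. \<bar>Lg \<gamma> j (c j)\<bar>)" by (rule summable_rabs[OF sa])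
  also have "\<dots> \<le> Kg \<gamma>" unfolding Kg_def
    by (rule suminf_le[OF _ sa Bg_summable[OF a]]) (rule Lg_bound[OF a])
  finally show ?thesis .
qed

lemma Bg_nonneg: "0 \<le> Bg \<gamma> j" by (simp add: Bg_def)

lemma Lg_sum_bound: "admissible \<gamma> \<Longrightarrow> \<bar>\<Sum>j<n. Lg \<gamma> j (c j)\<bar> \<le> Kg \<gamma>"
proof -
  assume a: "admissible \<gamma>"
  have "\<bar>\<Sum>j<n. Lg \<gamma> j (c j)\<bar> \<le> (\<Sum>j<n. \<bar>Lg \<gamma> j (c j)\<bar>)" by (rule sum_abs)
  also have "\<dots> \<le> (\<Sum>j<n. Bg \<gamma> j)" by (rule sum_mono) (rule Lg_bound[OF a])
  also have "\<dots> \<le> Kg \<gamma>" unfolding Kg_def by (rule sum_le_suminf[OF Bg_summable[OF a]]) (simp_all add: Bg_nonneg)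
  finally show ?thesis .
qed

lemma Hn_exp: "admissible \<gamma> \<Longrightarrow> Hn \<gamma> n x = exp (\<Sum>j<n. Lg \<gamma> j (bl x j))"
  by (simp add: Hn_def exp_sum Lg_def qg_pos)

lemma Hn_bound: "admissible \<gamma> \<Longrightarrow> 0 < Hn \<gamma> n x \<and> Hn \<gamma> n x \<le> exp (Kg \<gamma>)"
  using Lg_sum_bound[where \<gamma>=\<gamma> and n=n and c="bl x"] by (simp add: Hn_exp abs_le_iff)

lemma Hg_bound: "admissible \<gamma> \<Longrightarrow> exp (- Kg \<gamma>) \<le> Hg \<gamma> x \<and> Hg \<gamma> x \<le> exp (Kg \<gamma>)"
  using Lg_suminf_bound[where \<gamma>=\<gamma> and c="bl x"] by (simp add: Hg_def abs_le_iff)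

lemma Hn_tendsto: "admissible \<gamma> \<Longrightarrow> (\<lambda>n. Hn \<gamma> n x) \<longlonglongrightarrow> Hg \<gamma> x"
  unfolding Hn_exp Hg_def by (intro tendsto_exp summable_LIMSEQ Lg_summable)

lemma coordfun_meas [measurable]: "(\<lambda>x. f (bl x j) :: real) \<in> borel_measurable Linf_M"
  by (rule measurable_compose[OF bl_coord_meas]) simp

lemma Hn_meas [measurable]: "Hn \<gamma> n \<in> borel_measurable Linf_M"
  unfolding Hn_def[abs_def] by measurable

lemma Hg_meas: "admissible \<gamma> \<Longrightarrow> Hg \<gamma> \<in> borel_measurable Linf_M"
  by (rule borel_measurable_LIMSEQ_real[OF Hn_tendsto]) auto

lemma good_Hg: "admissible \<gamma> \<Longrightarrow> good (Hg \<gamma>)"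
  unfolding good_def using Hg_meas Hg_bound by (intro conjI exI[of _ "exp (- Kg \<gamma>)"] exI[of _ "exp (Kg \<gamma>)"]) auto


lemma Cyl_snoc: "x \<in> Cyl (k @ [b]) \<longleftrightarrow> x \<in> Cyl k \<and> bl x (length k) = b"
  by (auto simp: Cyl_def nth_append less_Suc_eq)

lemma ind_split: "(indicator (Cyl k) x :: real) = indicator (Cyl (k @ [True])) x + indicator (Cyl (k @ [False])) x"
  by (cases "x \<in> Cyl k"; cases "bl x (length k)") (auto simp: Cyl_snoc indicator_def)

lemma Hn_int_aux:
  assumes a: "admissible \<gamma>"
  shows "(\<integral>\<^sup>+ x. ennreal (Hn \<gamma> (length k + d) x * indicator (Cyl k) x) \<partial>Mstd) = ennreal (\<Prod>j<length k. qg \<gamma> j (k ! j))"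
proof (induct d arbitrary: k)
  case 0
  let ?C = "\<Prod>j<length k. 2 * qg \<gamma> j (k ! j)"
  have "(\<integral>\<^sup>+ x. ennreal (Hn \<gamma> (length k + 0) x * indicator (Cyl k) x) \<partial>Mstd) = (\<integral>\<^sup>+ x. ennreal ?C * indicator (Cyl k) x \<partial>Mstd)"
  proof (rule nn_integral_cong)
    fix x show "ennreal (Hn \<gamma> (length k + 0) x * indicator (Cyl k) x) = ennreal ?C * indicator (Cyl k) x"
    proof (cases "x \<in> Cyl k")
      case True
      then have "Hn \<gamma> (length k) x = ?C" unfolding Hn_def by (intro prod.cong) (auto simp: Cyl_def)
      then show ?thesis using True by simp
    qed simp
  qed
  also have "\<dots> = ennreal ?C * emeasure Mstd (Cyl k)" by (simp add: nn_integral_cmult_indicator)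
  also have "\<dots> = ennreal (?C * (1/2) ^ length k)"
    using qg_pos[OF a] by (simp add: Mstd_Cyl ennreal_mult prod_nonneg less_imp_le)
  also have "?C * (1/2) ^ length k = (\<Prod>j<length k. qg \<gamma> j (k ! j))"
  proof -
    have "?C = 2 ^ length k * (\<Prod>j<length k. qg \<gamma> j (k ! j))" by (simp add: prod.distrib)
    moreover have "(2::real) ^ length k * (1/2) ^ length k = 1" by (simp add: power_mult_distrib[symmetric])
    moreover have "(2 ^ length k * P) * (1/2) ^ length k = P * ((2::real) ^ length k * (1/2) ^ length k)" for P :: real
      by algebra
    ultimately show ?thesis by simp
  qed
  finally show ?case .
next
  case (Suc d)
  let ?P = "\<Prod>j<length k. qg \<gamma> j (k ! j)"
  have pP: "0 \<le> ?P" using qg_pos[OF a] by (simp add: prod_nonneg less_imp_le)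
  have e: "length (k @ [b]) + d = length k + Suc d" for b by simp
  have "(\<integral>\<^sup>+ x. ennreal (Hn \<gamma> (length k + Suc d) x * indicator (Cyl k) x) \<partial>Mstd)
     = (\<integral>\<^sup>+ x. ennreal (Hn \<gamma> (length (k @ [True]) + d) x * indicator (Cyl (k @ [True])) x)
            + ennreal (Hn \<gamma> (length (k @ [False]) + d) x * indicator (Cyl (k @ [False])) x) \<partial>Mstd)"
  proof (rule nn_integral_cong)
    fix x
    have nn: "0 \<le> Hn \<gamma> (length k + Suc d) x" using Hn_bound[OF a] less_imp_le by blast
    show "ennreal (Hn \<gamma> (length k + Suc d) x * indicator (Cyl k) x) =
       ennreal (Hn \<gamma> (length (k @ [True]) + d) x * indicator (Cyl (k @ [True])) x)
        + ennreal (Hn \<gamma> (length (k @ [False]) + d) x * indicator (Cyl (k @ [False])) x)"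
      unfolding e ind_split[of k x] distrib_left using nn by (intro ennreal_plus) auto
  qed
  also have "\<dots> = (\<integral>\<^sup>+ x. ennreal (Hn \<gamma> (length (k @ [True]) + d) x * indicator (Cyl (k @ [True])) x) \<partial>Mstd)
      + (\<integral>\<^sup>+ x. ennreal (Hn \<gamma> (length (k @ [False]) + d) x * indicator (Cyl (k @ [False])) x) \<partial>Mstd)"
    by (rule nn_integral_add; simp only: measurable_Mstd; measurable)
  also have "\<dots> = ennreal (?P * qg \<gamma> (length k) True) + ennreal (?P * qg \<gamma> (length k) False)"
    unfolding Suc by (simp add: nth_append)
  also have "\<dots> = ennreal (?P * qg \<gamma> (length k) True + ?P * qg \<gamma> (length k) False)"
    using pP qg_pos[OF a, of "length k"] by (intro ennreal_plus[symmetric]) (auto intro: mult_nonneg_nonneg less_imp_le)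
  also have "?P * qg \<gamma> (length k) True + ?P * qg \<gamma> (length k) False = ?P"
    using qg_sum[of \<gamma> "length k"] by (simp add: distrib_left[symmetric])
  finally show ?case .
qed

lemma Hg_Cyl:
  assumes a: "admissible \<gamma>"
  shows "emeasure (dens (Hg \<gamma>)) (Cyl k) = ennreal (\<Prod>j<length k. qg \<gamma> j (k ! j))"
proof -
  have [measurable]: "Hg \<gamma> \<in> borel_measurable Linf_M" using Hg_meas[OF a] .
  let ?u = "\<lambda>i x. ennreal (Hn \<gamma> (i + length k) x * indicator (Cyl k) x)"
  let ?u' = "\<lambda>x. ennreal (Hg \<gamma> x * indicator (Cyl k) x)"
  have lim: "(\<lambda>i. integral\<^sup>N Mstd (?u i)) \<longlonglongrightarrow> integral\<^sup>N Mstd ?u'"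
  proof (rule nn_integral_dominated_convergence[where w="\<lambda>_. ennreal (exp (Kg \<gamma>))"])
    show "\<And>i. ?u i \<in> borel_measurable Mstd" by simp
    show "?u' \<in> borel_measurable Mstd" by simp
    show "(\<lambda>_. ennreal (exp (Kg \<gamma>))) \<in> borel_measurable Mstd" by simp
    fix j show "AE x in Mstd. ?u j x \<le> ennreal (exp (Kg \<gamma>))"
    proof (rule AE_I2, rule ennreal_leI)
      fix x
      have "Hn \<gamma> (j + length k) x \<le> exp (Kg \<gamma>)" "0 < Hn \<gamma> (j + length k) x" using Hn_bound[OF a] by auto
      then show "Hn \<gamma> (j + length k) x * indicator (Cyl k) x \<le> exp (Kg \<gamma>)" by (simp add: indicator_def)
    qed
  next
    show "(\<integral>\<^sup>+ x. ennreal (exp (Kg \<gamma>)) \<partial>Mstd) < \<infinity>"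
      using Mstd_fin[of Linf] by (simp add: ennreal_mult_less_top top.not_eq_extremum)
    show "AE x in Mstd. (\<lambda>i. ?u i x) \<longlonglongrightarrow> ?u' x"
      by (rule AE_I2) (intro tendsto_ennrealI tendsto_mult_right LIMSEQ_ignore_initial_segment Hn_tendsto a)
  qed
  have ci: "integral\<^sup>N Mstd (?u i) = ennreal (\<Prod>j<length k. qg \<gamma> j (k ! j))" for i
  proof -
    have "i + length k = length k + i" by simp
    then show ?thesis using Hn_int_aux[OF a, of k i] by (simp only:)
  qed
  have lim2: "(\<lambda>i. integral\<^sup>N Mstd (?u i)) \<longlonglongrightarrow> ennreal (\<Prod>j<length k. qg \<gamma> j (k ! j))"
    by (simp only: ci) (rule tendsto_const)
  have "integral\<^sup>N Mstd ?u' = ennreal (\<Prod>j<length k. qg \<gamma> j (k ! j))"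
    by (rule LIMSEQ_unique[OF lim lim2])
  moreover have "emeasure (dens (Hg \<gamma>)) (Cyl k) = integral\<^sup>N Mstd ?u'"
  proof -
    have "emeasure (dens (Hg \<gamma>)) (Cyl k) = (\<integral>\<^sup>+ x. ennreal (Hg \<gamma> x) * indicator (Cyl k) x \<partial>Mstd)"
      unfolding dens_def by (rule emeasure_density) simp_all
    also have "\<dots> = integral\<^sup>N Mstd ?u'"
      by (rule nn_integral_cong) (simp add: indicator_def)
    finally show ?thesis .
  qed
  ultimately show ?thesis by simp
qed

lemma prod_alpha: "(\<Prod>i\<in>{1..n}. alpha \<gamma> g i) = (\<Prod>j<n. qg \<gamma> j (map (\<lambda>j. g (Suc j) = odd j) [0..<n] ! j))"
proof -
  have q: "qg \<gamma> j (g (Suc j) = odd j) = alpha \<gamma> g (Suc j)" for j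
    by (cases "g (Suc j)") (simp_all add: qg_def alpha_def)
  have "(\<Prod>j<n. qg \<gamma> j (map (\<lambda>j. g (Suc j) = odd j) [0..<n] ! j)) = (\<Prod>j<n. alpha \<gamma> g (Suc j))"
    by (rule prod.cong) (simp_all add: q)
  also have "\<dots> = (\<Prod>i\<in>{1..n}. alpha \<gamma> g i)"
    using prod.atLeast1_atMost_eq[of "alpha \<gamma> g" n] by simp
  finally show ?thesis by simp
qed

lemma Zc_std_path: "Zc (std_path g n) = Cyl (map (\<lambda>j. g (Suc j) = odd j) [0..<n])"
  by (rule Zc_Cyl[OF std_path_eq]) simp

lemma gamma_dens: "admissible \<gamma> \<Longrightarrow> gamma_measure \<gamma> (dens (Hg \<gamma>))"
  unfolding gamma_measure_def
proof (intro conjI allI)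
  assume a: "admissible \<gamma>"
  show "sets (dens (Hg \<gamma>)) = sets Linf_M" by simp
  show "prob_space (dens (Hg \<gamma>))"
    by (rule prob_spaceI) (simp add: Hg_Cyl[OF a, of "[]", unfolded Cyl_Nil])
  fix n g show "emeasure (dens (Hg \<gamma>)) (Zc (std_path g n)) = ennreal (\<Prod>i\<in>{1..n}. alpha \<gamma> g i)"
    by (subst prod_alpha) (simp add: Zc_std_path Hg_Cyl[OF a])
qed

lemma gamma_unique:
  assumes a: "admissible \<gamma>" and m: "gamma_measure \<gamma> \<mu>"
  shows "\<mu> = dens (Hg \<gamma>)"
proof (rule Linf_measure_eq)
  show "sets \<mu> = sets Linf_M" using m by (simp add: gamma_measure_def)
  show "sets (dens (Hg \<gamma>)) = sets Linf_M" by simp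
  have ps: "prob_space \<mu>" using m by (simp add: gamma_measure_def)
  have sp: "space \<mu> = Linf" using sets_eq_imp_space_eq[OF \<open>sets \<mu> = sets Linf_M\<close>] by simp
  show "emeasure \<mu> Linf \<noteq> \<infinity>" using prob_space.emeasure_space_1[OF ps] sp by simp
  fix k
  define g where "g i = (k ! (i - 1) = odd (i - 1))" for i
  have mk: "map (\<lambda>j. g (Suc j) = odd j) [0..<length k] = k"
    by (rule nth_equalityI) (auto simp: g_def)
  have "Cyl k = Zc (std_path g (length k))" using Zc_std_path[of g "length k"] mk by simp
  then show "emeasure \<mu> (Cyl k) = emeasure (dens (Hg \<gamma>)) (Cyl k)"
  proof -
    have "emeasure \<mu> (Zc (std_path g (length k))) = ennreal (\<Prod>i\<in>{1..length k}. alpha \<gamma> g i)"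
      using m by (simp add: gamma_measure_def)
    moreover have "emeasure (dens (Hg \<gamma>)) (Zc (std_path g (length k))) = ennreal (\<Prod>i\<in>{1..length k}. alpha \<gamma> g i)"
      using gamma_dens[OF a] by (simp add: gamma_measure_def)
    ultimately show ?thesis using \<open>Cyl k = Zc (std_path g (length k))\<close> by simp
  qed
qed


lemma Lam_deg_10: "Lam_deg (1, 0) = {(1, 0, [True]), (1, 0, [False])}"
proof (intro subset_antisym subsetI)
  fix l assume "l \<in> Lam_deg (1, 0)"
  then obtain k where l: "l = (1, 0, k)" "length k = 1" by (auto simp: Lam_deg_def Lam_def deg_def)
  then obtain v where "k = [v]" by (auto simp: length_Suc_conv)
  then show "l \<in> {(1, 0, [True]), (1, 0, [False])}" using l by (cases v) auto
qed (auto simp: Lam_deg_def Lam_def deg_def)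

lemma Lam_deg_01: "Lam_deg (0, 1) = {(0, 1, [])}"
  by (auto simp: Lam_deg_def Lam_def deg_def)

lemma vme: "vertex_matrix_entry (1, 0) = 2" "vertex_matrix_entry (0, 1) = 1"
  unfolding vertex_matrix_entry_def Lam_deg_10 Lam_deg_01 by simp_all

lemma PF_vals: "PF_measure M \<Longrightarrow> l \<in> Lam \<Longrightarrow> emeasure M (Zc l) = ennreal (2 powr (- real (fst (deg l))))"
  unfolding PF_measure_def vme by simp

lemma two_powr: "(2::real) powr (- real n) = (1/2) ^ n"
  by (simp add: powr_minus powr_realpow power_one_over inverse_eq_divide)

lemma PF_eq: 
  assumes "PF_measure M" shows "M = Mstd"
proof -
  have "Mstd = M"
  proof (rule Linf_measure_eq)
    show "sets Mstd = sets Linf_M" by simp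
    show "sets M = sets Linf_M" using assms by (simp add: PF_measure_def)
    show "emeasure Mstd Linf \<noteq> \<infinity>" using Mstd_fin[of Linf] by simp
    fix k
    have l: "(length k, 0, k) \<in> Lam" by (simp add: Lam_def)
    have "Cyl k = Zc (length k, 0, k)" by (rule Zc_Cyl[symmetric]) simp_all
    then have "emeasure M (Cyl k) = ennreal ((1/2) ^ length k)"
      using PF_vals[OF assms l] by (simp add: deg_def two_powr)
    then show "emeasure Mstd (Cyl k) = emeasure M (Cyl k)" by (simp add: Mstd_Cyl)
  qed
  then show ?thesis by simp
qed

lemma good_one: "good (\<lambda>_. 1)"
  unfolding good_def by (intro conjI exI[of _ "1::real"]) auto

lemma dens_one: "dens (\<lambda>_. 1) = Mstd"
  unfolding dens_def by (simp add: density_1)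

theorem mainTheorem7:
  fixes \<gamma> :: "nat \<Rightarrow> real"
  assumes "admissible \<gamma>"
  shows "(\<exists>!\<mu>. gamma_measure \<gamma> \<mu>)
    \<and> (\<forall>\<mu>. gamma_measure \<gamma> \<mu> \<longrightarrow> SBFS \<mu> D_std pre_std code_std)
    \<and> (\<forall>M. PF_measure M \<longrightarrow> (\<forall>l\<in>Lam. emeasure M (Zc l) = ennreal (2 powr (- real (fst (deg l))))))
    \<and> (\<forall>\<mu> M. gamma_measure \<gamma> \<mu> \<longrightarrow> PF_measure M \<longrightarrow>
          absolutely_continuous \<mu> M \<and> absolutely_continuous M \<mu>)
    \<and> (\<forall>\<mu> M. gamma_measure \<gamma> \<mu> \<longrightarrow> PF_measure M \<longrightarrow> std_rep_equiv \<mu> M)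
    \<and> (\<forall>\<gamma>' \<mu> \<mu>'. admissible \<gamma>' \<longrightarrow> gamma_measure \<gamma> \<mu> \<longrightarrow> gamma_measure \<gamma>' \<mu>' \<longrightarrow>
          std_rep_equiv \<mu> \<mu>')"
proof (intro conjI allI impI ballI)
  show "\<exists>!\<mu>. gamma_measure \<gamma> \<mu>"
    using gamma_dens[OF assms] gamma_unique[OF assms] by blast
next
  fix \<mu> assume "gamma_measure \<gamma> \<mu>"
  then have "\<mu> = dens (Hg \<gamma>)" by (rule gamma_unique[OF assms])
  then show "SBFS \<mu> D_std pre_std code_std" using SBFS_dens[OF good_Hg[OF assms]] by simp
next
  fix M l assume "PF_measure M" "l \<in> Lam"
  then show "emeasure M (Zc l) = ennreal (2 powr (- real (fst (deg l))))" by (rule PF_vals)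
next
  fix \<mu> M assume m: "gamma_measure \<gamma> \<mu>" and p: "PF_measure M"
  have e: "\<mu> = dens (Hg \<gamma>)" "M = Mstd" using gamma_unique[OF assms m] PF_eq[OF p] by auto
  show "absolutely_continuous \<mu> M" unfolding e absolutely_continuous_def
    using null_dens[OF good_Hg[OF assms]] by simp
  show "absolutely_continuous M \<mu>" unfolding e absolutely_continuous_def
    using null_dens[OF good_Hg[OF assms]] by simp
next
  fix \<mu> M assume m: "gamma_measure \<gamma> \<mu>" and p: "PF_measure M"
  have e: "\<mu> = dens (Hg \<gamma>)" "M = dens (\<lambda>_. 1)" using gamma_unique[OF assms m] PF_eq[OF p] dens_one by auto
  show "std_rep_equiv \<mu> M" unfolding e by (rule std_rep_equiv_dens[OF good_Hg[OF assms] good_one])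
next
  fix \<gamma>' \<mu> \<mu>' assume a': "admissible \<gamma>'" and m: "gamma_measure \<gamma> \<mu>" and m': "gamma_measure \<gamma>' \<mu>'"
  have e: "\<mu> = dens (Hg \<gamma>)" "\<mu>' = dens (Hg \<gamma>')" using gamma_unique[OF assms m] gamma_unique[OF a' m'] by auto
  show "std_rep_equiv \<mu> \<mu>'" unfolding e by (rule std_rep_equiv_dens[OF good_Hg[OF assms] good_Hg[OF a']])
qed

end
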